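(* Let $G$ be a finite connected multigraph without loops on vertices $v_1,\ldots,v_n$, with $x_{i,j}$ edges between $v_i$ and $v_j$, whose skeleton $\overline{G}$ is a tree, and let $(\mathbf{r},\mathbf{d})$ be an arithmetical structure on $G$ with $\mathbf{r}=(r_1,\ldots,r_n)$. Then \[ |\mathcal{K}(G;\mathbf{r})| = \prod_{\{i,j\}:\,x_{i,j}\neq 0} x_{i,j}\ \prod_{i=1}^n r_i^{\deg_{\overline{G}}(v_i)-2}, \] where the first product is over unordered pairs $\{i,j\}$ of vertices joined by at least one edge and $\deg_{\overline{G}}(v_i)$ is the degree of $v_i$ in the skeleton.
   Context: The skeleton $\overline{G}$ of a multigraph $G$ is the simple graph on the same vertex set with one edge between $v_i$ and $v_j$ whenever $x_{i,j}\ge1$. The adjacency matrix $A$ of $G$ has entries $x_{i,j}$. An arithmetical structure on $G$ is a pair $(\mathbf{r},\mathbf{d})$ with $\mathbf{d}\in\mathbb{Z}_{\ge0}^n$ and $\mathbf{r}\in\mathbb{Z}_{>0}^n$ having entries with greatest common divisor $1$, such that $(\mathrm{diag}(\mathbf{d})-A)\mathbf{r}=\mathbf{0}$. $\mathcal{K}(G;\mathbf{r})$ is the torsion subgroup of $\mathbb{Z}^n/(\mathrm{diag}(\mathbf{d})-A)\mathbb{Z}^n$. *)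

theory Defs
  imports Complex_Main
begin

text \<open>Multigraphs on vertices 0..n-1 (standing for v_1..v_n), given by the edge-multiplicity
  function x :: nat => nat => nat (x i j = number of edges between vertices i and j).\<close>

definition loopless_multigraph :: "nat \<Rightarrow> (nat \<Rightarrow> nat \<Rightarrow> nat) \<Rightarrow> bool" where
  "loopless_multigraph n x \<longleftrightarrow> (\<forall>i<n. \<forall>j<n. x i j = x j i) \<and> (\<forall>i<n. x i i = 0)"

definition skel_adj :: "nat \<Rightarrow> (nat \<Rightarrow> nat \<Rightarrow> nat) \<Rightarrow> nat \<Rightarrow> nat \<Rightarrow> bool" where
  "skel_adj n x i j \<longleftrightarrow> i < n \<and> j < n \<and> i \<noteq> j \<and> x i j \<ge> 1"

definition skel_connected :: "nat \<Rightarrow> (nat \<Rightarrow> nat \<Rightarrow> nat) \<Rightarrow> bool" where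
  "skel_connected n x \<longleftrightarrow> (\<forall>i<n. \<forall>j<n. (skel_adj n x)\<^sup>*\<^sup>* i j)"

definition skel_has_cycle :: "nat \<Rightarrow> (nat \<Rightarrow> nat \<Rightarrow> nat) \<Rightarrow> bool" where
  "skel_has_cycle n x \<longleftrightarrow> (\<exists>vs. distinct vs \<and> length vs \<ge> 3 \<and> set vs \<subseteq> {..<n} \<and>
      (\<forall>k < length vs. skel_adj n x (vs ! k) (vs ! ((k + 1) mod length vs))))"

definition skel_is_tree :: "nat \<Rightarrow> (nat \<Rightarrow> nat \<Rightarrow> nat) \<Rightarrow> bool" where
  "skel_is_tree n x \<longleftrightarrow> n \<ge> 1 \<and> skel_connected n x \<and> \<not> skel_has_cycle n x"

definition skel_degree :: "nat \<Rightarrow> (nat \<Rightarrow> nat \<Rightarrow> nat) \<Rightarrow> nat \<Rightarrow> nat" where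
  "skel_degree n x i = card {j. skel_adj n x i j}"

definition lap :: "(nat \<Rightarrow> nat \<Rightarrow> nat) \<Rightarrow> (nat \<Rightarrow> int) \<Rightarrow> nat \<Rightarrow> nat \<Rightarrow> int" where
  "lap x d i j = (if i = j then d i else 0) - int (x i j)"

definition arith_structure :: "nat \<Rightarrow> (nat \<Rightarrow> nat \<Rightarrow> nat) \<Rightarrow> (nat \<Rightarrow> int) \<Rightarrow> (nat \<Rightarrow> int) \<Rightarrow> bool" where
  "arith_structure n x r d \<longleftrightarrow>
     (\<forall>i<n. d i \<ge> 0) \<and> (\<forall>i<n. r i > 0) \<and> Gcd (r ` {..<n}) = 1 \<and>
     (\<forall>i<n. (\<Sum>j<n. lap x d i j * r j) = 0)"

text \<open>Z^n as integer vectors supported on {..<n}; the image lattice (diag(d)-A) Z^n;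
  the torsion subgroup of Z^n/(diag(d)-A)Z^n as a set of cosets.\<close>
definition zvecs :: "nat \<Rightarrow> (nat \<Rightarrow> int) set" where
  "zvecs n = {v. \<forall>i. i \<ge> n \<longrightarrow> v i = 0}"

definition image_lattice :: "nat \<Rightarrow> (nat \<Rightarrow> nat \<Rightarrow> nat) \<Rightarrow> (nat \<Rightarrow> int) \<Rightarrow> (nat \<Rightarrow> int) set" where
  "image_lattice n x d =
     {(\<lambda>i. if i < n then (\<Sum>j<n. lap x d i j * y j) else 0) | y. y \<in> zvecs n}"

definition critical_group :: "nat \<Rightarrow> (nat \<Rightarrow> nat \<Rightarrow> nat) \<Rightarrow> (nat \<Rightarrow> int) \<Rightarrow> (nat \<Rightarrow> int) set set" where
  "critical_group n x d =
     {v \<in> zvecs n. \<exists>k::int. k > 0 \<and> (\<lambda>i. k * v i) \<in> image_lattice n x d}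
       // {(u, v). u \<in> zvecs n \<and> v \<in> zvecs n \<and> (\<lambda>i. u i - v i) \<in> image_lattice n x d}"

end

theory Submission
  imports Defs "HOL-Library.Function_Algebras"
begin


lemma quot_card_map:
  assumes eq0: "equiv B0 R0" and eq1: "equiv B1 R1"
    and fB: "\<And>a. a \<in> B0 \<Longrightarrow> f a \<in> B1"
    and sur: "\<And>b. b \<in> B1 \<Longrightarrow> \<exists>a\<in>B0. (f a, b) \<in> R1"
    and rel: "\<And>a a'. a \<in> B0 \<Longrightarrow> a' \<in> B0 \<Longrightarrow> (a, a') \<in> R0 \<longleftrightarrow> (f a, f a') \<in> R1"
  shows "bij_betw (\<lambda>X. R1 `` (f ` X)) (B0 // R0) (B1 // R1)"
proof -
  have cl: "R1 `` (f ` (R0 `` {a})) = R1 `` {f a}" if "a \<in> B0" for a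
  proof
    show "R1 `` f ` R0 `` {a} \<subseteq> R1 `` {f a}"
    proof
      fix z assume "z \<in> R1 `` f ` R0 `` {a}"
      then obtain a' where a': "(a, a') \<in> R0" "(f a', z) \<in> R1" by auto
      hence "a' \<in> B0" using eq0 unfolding equiv_def refl_on_def by auto
      hence "(f a, f a') \<in> R1" using rel[OF that] a' by auto
      thus "z \<in> R1 `` {f a}" using a' eq1 unfolding equiv_def trans_def by blast
    qed
  next
    have "(a, a) \<in> R0" using eq0 that unfolding equiv_def refl_on_def by auto
    thus "R1 `` {f a} \<subseteq> R1 `` f ` R0 `` {a}" by auto
  qed
  show ?thesis
  proof (rule bij_betw_imageI)
    show "inj_on (\<lambda>X. R1 `` f ` X) (B0 // R0)"
    proof (rule inj_onI)
      fix X Y assume X: "X \<in> B0 // R0" and Y: "Y \<in> B0 // R0" and e: "R1 `` f ` X = R1 `` f ` Y"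
      obtain a where a: "a \<in> B0" "X = R0 `` {a}" using X by (auto elim: quotientE)
      obtain b where b: "b \<in> B0" "Y = R0 `` {b}" using Y by (auto elim: quotientE)
      have "R1 `` {f a} = R1 `` {f b}" using e cl a b by simp
      hence "(f a, f b) \<in> R1" using eq1 fB a b eq_equiv_class_iff by metis
      hence "(a, b) \<in> R0" using rel a b by simp
      thus "X = Y" using a b eq0 equiv_class_eq by metis
    qed
    show "(\<lambda>X. R1 `` f ` X) ` (B0 // R0) = B1 // R1"
    proof
      show "(\<lambda>X. R1 `` f ` X) ` (B0 // R0) \<subseteq> B1 // R1"
        using cl fB by (auto elim!: quotientE intro!: quotientI)
      show "B1 // R1 \<subseteq> (\<lambda>X. R1 `` f ` X) ` (B0 // R0)"
      proof
        fix Y assume "Y \<in> B1 // R1"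
        then obtain b where b: "b \<in> B1" "Y = R1 `` {b}" by (auto elim: quotientE)
        obtain a where a: "a \<in> B0" "(f a, b) \<in> R1" using sur b by blast
        have "R1 `` {f a} = R1 `` {b}" using equiv_class_eq[OF eq1 a(2)] .
        hence "Y = R1 `` f ` (R0 `` {a})" using cl a b by simp
        thus "Y \<in> (\<lambda>X. R1 `` f ` X) ` (B0 // R0)" using a by (auto intro: quotientI)
      qed
    qed
  qed
qed

lemma quot_card_eq:
  assumes "equiv B0 R0" "equiv B1 R1"
    "\<And>a. a \<in> B0 \<Longrightarrow> f a \<in> B1"
    "\<And>b. b \<in> B1 \<Longrightarrow> \<exists>a\<in>B0. (f a, b) \<in> R1"
    "\<And>a a'. a \<in> B0 \<Longrightarrow> a' \<in> B0 \<Longrightarrow> (a, a') \<in> R0 \<longleftrightarrow> (f a, f a') \<in> R1"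
  shows "card (B0 // R0) = card (B1 // R1)"
  using bij_betw_same_card[OF quot_card_map[OF assms]] .

definition sgrp :: "'a::ab_group_add set \<Rightarrow> bool" where
  "sgrp A \<longleftrightarrow> 0 \<in> A \<and> (\<forall>a\<in>A. \<forall>b\<in>A. a - b \<in> A)"

definition grel :: "'a::ab_group_add set \<Rightarrow> 'a set \<Rightarrow> ('a \<times> 'a) set" where
  "grel B A = {(u, v). u \<in> B \<and> v \<in> B \<and> u - v \<in> A}"

definition idx :: "'a::ab_group_add set \<Rightarrow> 'a set \<Rightarrow> nat" where
  "idx B A = card (B // grel B A)"

lemma sgrp_0: "sgrp A \<Longrightarrow> 0 \<in> A" by (simp add: sgrp_def)
lemma sgrp_diff: "sgrp A \<Longrightarrow> a \<in> A \<Longrightarrow> b \<in> A \<Longrightarrow> a - b \<in> A" by (simp add: sgrp_def)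
lemma sgrp_neg: "sgrp A \<Longrightarrow> a \<in> A \<Longrightarrow> - a \<in> A"
  by (metis sgrp_diff sgrp_0 diff_0)
lemma sgrp_add: "sgrp A \<Longrightarrow> a \<in> A \<Longrightarrow> b \<in> A \<Longrightarrow> a + b \<in> A"
  by (metis sgrp_diff sgrp_neg diff_minus_eq_add)

lemma equiv_grel: "sgrp A \<Longrightarrow> equiv B (grel B A)"
  unfolding equiv_def refl_on_def sym_def trans_def grel_def
  apply (auto simp: sgrp_0)
   apply (metis minus_diff_eq sgrp_neg)
  by (metis diff_add_cancel add_diff_eq sgrp_add add.commute diff_add_eq)

lemma grel_class: "grel C A `` {c} = {v. c \<in> C \<and> v \<in> C \<and> c - v \<in> A}"
  by (auto simp: grel_def)

lemma tower_piece:
  assumes A: "sgrp A" and B: "sgrp B" and C: "sgrp C" and AB: "A \<subseteq> B" and BC: "B \<subseteq> C"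
    and c: "c \<in> C"
  defines "Y \<equiv> grel C B `` {c}"
  shows "{X \<in> C // grel C A. X \<subseteq> Y} = Y // grel Y A"
    and "card (Y // grel Y A) = card (B // grel B A)"
proof -
  have YC: "Y \<subseteq> C" unfolding Y_def grel_def by auto
  have cls: "grel C A `` {c'} = grel Y A `` {c'}" if "c' \<in> Y" for c'
  proof -
    have "v \<in> Y" if "v \<in> C" "c' - v \<in> A" for v
    proof -
      have "c - c' \<in> B" using \<open>c' \<in> Y\<close> unfolding Y_def grel_def by auto
      moreover have "c' - v \<in> B" using that AB by auto
      ultimately have "(c - c') + (c' - v) \<in> B" using sgrp_add[OF B] by blast
      thus ?thesis using that c unfolding Y_def grel_def by auto
    qed
    thus ?thesis using that YC unfolding grel_def by auto
  qed
  show "{X \<in> C // grel C A. X \<subseteq> Y} = Y // grel Y A"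
  proof
    show "{X \<in> C // grel C A. X \<subseteq> Y} \<subseteq> Y // grel Y A"
    proof
      fix X assume "X \<in> {X \<in> C // grel C A. X \<subseteq> Y}"
      then obtain c' where c': "c' \<in> C" "X = grel C A `` {c'}" "X \<subseteq> Y" by (auto elim: quotientE)
      have "c' \<in> X" using c' sgrp_0[OF A] unfolding grel_def by auto
      hence "c' \<in> Y" using c' by auto
      thus "X \<in> Y // grel Y A" using cls c' by (auto intro: quotientI)
    qed
    show "Y // grel Y A \<subseteq> {X \<in> C // grel C A. X \<subseteq> Y}"
    proof
      fix X assume "X \<in> Y // grel Y A"
      then obtain c' where c': "c' \<in> Y" "X = grel Y A `` {c'}" by (auto elim: quotientE)
      have "X \<subseteq> Y" using c' unfolding grel_def by auto
      moreover have "X \<in> C // grel C A"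
      proof -
        have "X = grel C A `` {c'}" using cls[OF c'(1)] c' by simp
        moreover have "c' \<in> C" using c' YC by auto
        ultimately show ?thesis using quotientI[of c' C "grel C A"] by simp
      qed
      ultimately show "X \<in> {X \<in> C // grel C A. X \<subseteq> Y}" by auto
    qed
  qed
  have "card (B // grel B A) = card (Y // grel Y A)"
  proof (rule quot_card_eq[where f = "\<lambda>b. c - b"])
    show "equiv B (grel B A)" using equiv_grel[OF A] .
    show "equiv Y (grel Y A)" using equiv_grel[OF A] .
    show "c - b \<in> Y" if "b \<in> B" for b
    proof -
      have "c - b \<in> C" using sgrp_diff[OF C c] that BC by auto
      thus ?thesis using that c unfolding Y_def grel_def by auto
    qed
    show "\<exists>a\<in>B. (c - a, y) \<in> grel Y A" if "y \<in> Y" for y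
      using that sgrp_0[OF A] unfolding Y_def grel_def by (intro bexI[of _ "c - y"]) auto
    show "(a, a') \<in> grel B A \<longleftrightarrow> (c - a, c - a') \<in> grel Y A" if "a \<in> B" "a' \<in> B" for a a'
    proof -
      have 1: "c - a \<in> Y" "c - a' \<in> Y"
        using that sgrp_diff[OF C c] BC c unfolding Y_def grel_def by auto
      have "a - a' \<in> A \<longleftrightarrow> (c - a) - (c - a') \<in> A"
        using sgrp_neg[OF A, of "a - a'"] sgrp_neg[OF A, of "a' - a"] by (auto simp: algebra_simps)
      thus ?thesis using that 1 unfolding grel_def by auto
    qed
  qed
  thus "card (Y // grel Y A) = card (B // grel B A)" by simp
qed

lemma tower:
  assumes A: "sgrp A" and B: "sgrp B" and C: "sgrp C" and AB: "A \<subseteq> B" and BC: "B \<subseteq> C"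
    and f1: "finite (C // grel C B)" and f2: "finite (B // grel B A)"
  shows "card (C // grel C A) = card (C // grel C B) * card (B // grel B A)"
    and "finite (C // grel C A)"
proof -
  define S where "S Y = {X \<in> C // grel C A. X \<subseteq> Y}" for Y
  have U: "C // grel C A = (\<Union>Y \<in> C // grel C B. S Y)"
  proof
    show "C // grel C A \<subseteq> (\<Union>Y \<in> C // grel C B. S Y)"
    proof
      fix X assume "X \<in> C // grel C A"
      then obtain c where c: "c \<in> C" "X = grel C A `` {c}" by (auto elim: quotientE)
      have "X \<subseteq> grel C B `` {c}" using c AB unfolding grel_def by auto
      moreover have "grel C B `` {c} \<in> C // grel C B" using c by (auto intro: quotientI)
      ultimately show "X \<in> (\<Union>Y \<in> C // grel C B. S Y)" using \<open>X \<in> C // grel C A\<close>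
        unfolding S_def by blast
    qed
  qed (auto simp: S_def)
  have SY: "S Y = Y // grel Y A \<and> card (S Y) = card (B // grel B A)" if Y: "Y \<in> C // grel C B" for Y
  proof -
    obtain c where c: "c \<in> C" "Y = grel C B `` {c}" using Y by (blast elim: quotientE)
    show ?thesis using tower_piece[OF A B C AB BC c(1)] c unfolding S_def by simp
  qed
  have finS: "finite (S Y)" if "Y \<in> C // grel C B" for Y
  proof -
    have "card (S Y) \<noteq> 0 \<or> S Y = {}"
    proof (cases "card (B // grel B A) = 0")
      case True
      have "B \<noteq> {}" using sgrp_0[OF B] by auto
      hence "B // grel B A \<noteq> {}" by (simp add: quotient_def)
      thus ?thesis using True f2 by simp
    next
      case False
      have "card (S Y) = card (B // grel B A)" using SY[OF that] by blast
      thus ?thesis using False by argo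
    qed
    thus ?thesis using card_ge_0_finite by (metis card.infinite finite.emptyI)
  qed
  have disj: "S Y1 \<inter> S Y2 = {}" if "Y1 \<in> C // grel C B" "Y2 \<in> C // grel C B" "Y1 \<noteq> Y2" for Y1 Y2
  proof -
    have "Y1 \<inter> Y2 = {}" using quotient_disj[OF equiv_grel[OF B] that(1,2)] that(3) by auto
    moreover have "X \<noteq> {}" if "X \<in> C // grel C A" for X
      using that equiv_grel[OF A, of C] by (auto elim!: quotientE simp: equiv_def refl_on_def)
    ultimately show ?thesis unfolding S_def by blast
  qed
  have "card (C // grel C A) = (\<Sum>Y \<in> C // grel C B. card (S Y))"
    unfolding U by (rule card_UN_disjoint[OF f1]) (use finS disj in auto)
  also have "\<dots> = (\<Sum>Y \<in> C // grel C B. card (B // grel B A))"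
    by (rule sum.cong[OF refl]) (use SY in blast)
  finally show "card (C // grel C A) = card (C // grel C B) * card (B // grel B A)" by simp
  show "finite (C // grel C A)" unfolding U using f1 finS by auto
qed

lemma tower_fin:
  assumes A: "sgrp A" and B: "sgrp B" and C: "sgrp C" and AB: "A \<subseteq> B" and BC: "B \<subseteq> C"
    and f: "finite (C // grel C A)"
  shows "finite (C // grel C B)" "finite (B // grel B A)"
proof -
  have "B // grel B A \<subseteq> C // grel C A"
  proof
    fix X assume "X \<in> B // grel B A"
    then obtain b where b: "b \<in> B" "X = grel B A `` {b}" by (auto elim: quotientE)
    have "grel B A `` {b} = grel C A `` {b}"
    proof -
      have "v \<in> B" if "v \<in> C" "b - v \<in> A" for v
        using sgrp_diff[OF B b(1), of "b - v"] that AB by auto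
      thus ?thesis using b BC unfolding grel_def by auto
    qed
    thus "X \<in> C // grel C A" using b BC by (auto intro: quotientI)
  qed
  thus "finite (B // grel B A)" using f finite_subset by blast
  have "C // grel C B = (\<lambda>X. grel C B `` X) ` (C // grel C A)"
  proof
    have e: "grel C B `` (grel C A `` {c}) = grel C B `` {c}" if "c \<in> C" for c
    proof
      show "grel C B `` grel C A `` {c} \<subseteq> grel C B `` {c}"
        using equiv_grel[OF B, of C] AB unfolding equiv_def trans_def grel_def by blast
      show "grel C B `` {c} \<subseteq> grel C B `` grel C A `` {c}"
        using that sgrp_0[OF A] unfolding grel_def by auto
    qed
    show "C // grel C B \<subseteq> (\<lambda>X. grel C B `` X) ` (C // grel C A)"
    proof
      fix Y assume "Y \<in> C // grel C B"
      then obtain c where c: "c \<in> C" "Y = grel C B `` {c}" by (blast elim: quotientE)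
      hence "Y = grel C B `` (grel C A `` {c})" using e by simp
      moreover have "grel C A `` {c} \<in> C // grel C A" using c by (blast intro: quotientI)
      ultimately show "Y \<in> (\<lambda>X. grel C B `` X) ` (C // grel C A)" by blast
    qed
    show "(\<lambda>X. grel C B `` X) ` (C // grel C A) \<subseteq> C // grel C B"
      using e by (force elim!: quotientE intro: quotientI)
  qed
  thus "finite (C // grel C B)" using f by simp
qed


definition zv :: "'e set \<Rightarrow> ('e \<Rightarrow> int) set" where
  "zv S = {t. \<forall>e. e \<notin> S \<longrightarrow> t e = 0}"

definition rs :: "'e set \<Rightarrow> ('e \<Rightarrow> int) \<Rightarrow> ('e \<Rightarrow> int)" where
  "rs S t = (\<lambda>e. if e \<in> S then t e else 0)"

lemma rs_0[simp]: "rs S 0 = 0" by (simp add: rs_def fun_eq_iff)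
lemma zv_0[simp]: "0 \<in> zv S" by (simp add: zv_def)

lemma sgrp_zv: "sgrp (zv S)"
  unfolding sgrp_def zv_def by auto

lemma card_fin_transfer: "finite Y \<Longrightarrow> Y \<noteq> {} \<Longrightarrow> card X = card Y \<Longrightarrow> finite X"
  by (metis card_0_eq card.infinite)

lemma fibration:
  assumes disj: "E1 \<inter> E2 = {}" and A: "sgrp A" and Asub: "A \<subseteq> zv (E1 \<union> E2)"
    and f1: "finite (zv E1 // grel (zv E1) (rs E1 ` A))"
    and f2: "finite (zv E2 // grel (zv E2) (A \<inter> zv E2))"
  shows "idx (zv (E1 \<union> E2)) A = idx (zv E1) (rs E1 ` A) * idx (zv E2) (A \<inter> zv E2)"
    and "finite (zv (E1 \<union> E2) // grel (zv (E1 \<union> E2)) A)"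
proof -
  define C where "C = zv (E1 \<union> E2)"
  define B where "B = {a + w | a w. a \<in> A \<and> w \<in> zv E2}"
  have C: "sgrp C" unfolding C_def by (rule sgrp_zv)
  have inB: "a + w \<in> B" if "a \<in> A" "w \<in> zv E2" for a w unfolding B_def using that by blast
  have z2: "0 \<in> zv E2" by (simp add: zv_def)
  have B: "sgrp B" unfolding sgrp_def
  proof
    show "0 \<in> B" using inB[OF sgrp_0[OF A] z2] by simp
    show "\<forall>a\<in>B. \<forall>b\<in>B. a - b \<in> B"
    proof (intro ballI)
      fix u v assume "u \<in> B" "v \<in> B"
      then obtain a w a' w' where "u = a + w" "v = a' + w'" "a \<in> A" "a' \<in> A" "w \<in> zv E2" "w' \<in> zv E2"
        unfolding B_def by blast
      moreover hence "u - v = (a - a') + (w - w')" by (simp add: algebra_simps)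
      moreover have "a - a' \<in> A" using sgrp_diff[OF A] calculation by blast
      moreover have "w - w' \<in> zv E2" using sgrp_diff[OF sgrp_zv] calculation by blast
      ultimately show "u - v \<in> B" unfolding B_def by blast
    qed
  qed
  have AB: "A \<subseteq> B" using inB[OF _ z2] by (metis add.right_neutral subsetI)
  have BC: "B \<subseteq> C"
  proof
    fix b assume "b \<in> B"
    then obtain a w where "b = a + w" "a \<in> A" "w \<in> zv E2" unfolding B_def by blast
    thus "b \<in> C" using Asub unfolding C_def zv_def by auto
  qed
  have i1: "card (C // grel C B) = card (zv E1 // grel (zv E1) (rs E1 ` A))"
  proof (rule quot_card_eq[where f = "rs E1"])
    show "equiv C (grel C B)" by (rule equiv_grel[OF B])
    show "equiv (zv E1) (grel (zv E1) (rs E1 ` A))"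
    proof (rule equiv_grel)
      show "sgrp (rs E1 ` A)" unfolding sgrp_def
      proof
        show "0 \<in> rs E1 ` A" using sgrp_0[OF A] rs_0[of E1] by (metis image_eqI)
        show "\<forall>a\<in>rs E1 ` A. \<forall>b\<in>rs E1 ` A. a - b \<in> rs E1 ` A"
        proof (intro ballI)
          fix a b assume "a \<in> rs E1 ` A" "b \<in> rs E1 ` A"
          then obtain a' b' where "a = rs E1 a'" "b = rs E1 b'" "a' \<in> A" "b' \<in> A" by blast
          moreover have "rs E1 a' - rs E1 b' = rs E1 (a' - b')" by (auto simp: rs_def)
          ultimately show "a - b \<in> rs E1 ` A" using sgrp_diff[OF A] by auto
        qed
      qed
    qed
    show "rs E1 a \<in> zv E1" for a by (simp add: rs_def zv_def)
    show "\<exists>a\<in>C. (rs E1 a, b) \<in> grel (zv E1) (rs E1 ` A)" if "b \<in> zv E1" for b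
    proof -
      have "rs E1 b = b" using that by (auto simp: rs_def zv_def)
      moreover have "b \<in> C" using that by (auto simp: C_def zv_def)
      moreover have "(b, b) \<in> grel (zv E1) (rs E1 ` A)"
        using that sgrp_0[OF A] rs_0[of E1] unfolding grel_def by (simp add: rev_image_eqI)
      ultimately show ?thesis by metis
    qed
    show "(u, v) \<in> grel C B \<longleftrightarrow> (rs E1 u, rs E1 v) \<in> grel (zv E1) (rs E1 ` A)"
      if "u \<in> C" "v \<in> C" for u v
    proof -
      have "u - v \<in> B \<longleftrightarrow> rs E1 u - rs E1 v \<in> rs E1 ` A"
      proof
        assume "u - v \<in> B"
        then obtain a w where aw: "u - v = a + w" "a \<in> A" "w \<in> zv E2" unfolding B_def by blast
        have "rs E1 u - rs E1 v = rs E1 a"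
        proof
          fix e show "(rs E1 u - rs E1 v) e = rs E1 a e"
            using fun_cong[OF aw(1), of e] aw(3) disj by (auto simp: rs_def zv_def)
        qed
        thus "rs E1 u - rs E1 v \<in> rs E1 ` A" using aw by auto
      next
        assume "rs E1 u - rs E1 v \<in> rs E1 ` A"
        then obtain a where a: "a \<in> A" "rs E1 u - rs E1 v = rs E1 a" by auto
        have "u - v - a \<in> zv E2"
        proof -
          have "(u - v - a) e = 0" if "e \<notin> E2" for e
          proof (cases "e \<in> E1")
            case True thus ?thesis using fun_cong[OF a(2), of e] by (simp add: rs_def)
          next
            case False
            thus ?thesis using \<open>u \<in> C\<close> \<open>v \<in> C\<close> a(1) Asub that by (auto simp: C_def zv_def)
          qed
          thus ?thesis by (simp add: zv_def)
        qed
        moreover have "u - v = a + (u - v - a)" by simp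
        ultimately show "u - v \<in> B" unfolding B_def using a(1) by blast
      qed
      moreover have "rs E1 u \<in> zv E1" "rs E1 v \<in> zv E1" by (auto simp: rs_def zv_def)
      ultimately show ?thesis using that unfolding grel_def by auto
    qed
  qed
  have i2: "card (zv E2 // grel (zv E2) (A \<inter> zv E2)) = card (B // grel B A)"
  proof (rule quot_card_eq[where f = "\<lambda>w. w"])
    show "equiv (zv E2) (grel (zv E2) (A \<inter> zv E2))"
      by (rule equiv_grel) (use A sgrp_zv[of E2] in \<open>auto simp: sgrp_def\<close>)
    show "equiv B (grel B A)" by (rule equiv_grel[OF A])
    show "w \<in> B" if "w \<in> zv E2" for w
      using inB[OF sgrp_0[OF A] that] by simp
    show "\<exists>a\<in>zv E2. (a, b) \<in> grel B A" if "b \<in> B" for b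
    proof -
      obtain a w where aw: "b = a + w" "a \<in> A" "w \<in> zv E2" using \<open>b \<in> B\<close> unfolding B_def by blast
      have "w \<in> B" using inB[OF sgrp_0[OF A] aw(3)] by simp
      moreover have "w - b \<in> A" using aw sgrp_neg[OF A] by simp
      ultimately show ?thesis using aw that unfolding grel_def by blast
    qed
    show "(a, a') \<in> grel (zv E2) (A \<inter> zv E2) \<longleftrightarrow> (a, a') \<in> grel B A"
      if "a \<in> zv E2" "a' \<in> zv E2" for a a'
    proof -
      have "a \<in> B" "a' \<in> B" using inB[OF sgrp_0[OF A]] that by force+
      moreover have "a - a' \<in> zv E2" using sgrp_diff[OF sgrp_zv] that by blast
      ultimately show ?thesis using that unfolding grel_def by auto
    qed
  qed
  have fC: "finite (C // grel C B)"
    by (rule card_fin_transfer[OF f1 _ i1]) (use zv_0 in blast)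
  have fB: "finite (B // grel B A)"
    by (rule card_fin_transfer[OF f2 _ i2[symmetric]]) (use zv_0 in blast)
  show "idx (zv (E1 \<union> E2)) A = idx (zv E1) (rs E1 ` A) * idx (zv E2) (A \<inter> zv E2)"
    using tower(1)[OF A B C AB BC fC fB] i1 i2 unfolding idx_def C_def by simp
  show "finite (zv (E1 \<union> E2) // grel (zv (E1 \<union> E2)) A)"
    using tower(2)[OF A B C AB BC fC fB] unfolding C_def by simp
qed

lemma zv_empty: "zv {} = {0}" by (auto simp: zv_def fun_eq_iff)

lemma idx_empty: "sgrp A \<Longrightarrow> card (zv {} // grel (zv {}) A) = 1 \<and> finite (zv {} // grel (zv {}) A)"
  by (simp add: zv_empty quotient_def)

lemma card_quot_eq0: "card (S // grel S {0}) = card S \<and> (finite (S // grel S {0}) \<longleftrightarrow> finite S)"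
proof -
  have "S // grel S {0} = (\<lambda>x. {x}) ` S" unfolding quotient_def grel_def by auto
  moreover have "inj_on (\<lambda>x. {x}) S" by (auto simp: inj_on_def)
  ultimately show ?thesis by (simp add: card_image finite_image_iff)
qed

lemma idx_single:
  fixes c :: int assumes c: "c \<noteq> 0"
  shows "card (zv {e} // grel (zv {e}) {t \<in> zv {e}. c dvd t e}) = nat \<bar>c\<bar>"
    and "finite (zv {e} // grel (zv {e}) {t \<in> zv {e}. c dvd t e})"
proof -
  define f where "f k = (\<lambda>e'. if e' = e then k else (0::int))" for k
  have s0: "sgrp ({0}::int set)" by (simp add: sgrp_def)
  have sc: "sgrp {t \<in> zv {e}. c dvd t e}" unfolding sgrp_def zv_def by auto
  have "card ({0..<\<bar>c\<bar>} // grel {0..<\<bar>c\<bar>} {0}) = card (zv {e} // grel (zv {e}) {t \<in> zv {e}. c dvd t e})"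
  proof (rule quot_card_eq[where f = f])
    show "equiv {0..<\<bar>c\<bar>} (grel {0..<\<bar>c\<bar>} {0})" by (rule equiv_grel[OF s0])
    show "equiv (zv {e}) (grel (zv {e}) {t \<in> zv {e}. c dvd t e})" by (rule equiv_grel[OF sc])
    show "f a \<in> zv {e}" for a by (simp add: f_def zv_def)
    show "\<exists>a\<in>{0..<\<bar>c\<bar>}. (f a, b) \<in> grel (zv {e}) {t \<in> zv {e}. c dvd t e}" if "b \<in> zv {e}" for b
    proof (intro bexI)
      have "c dvd (b e mod \<bar>c\<bar> - b e)"
        by (metis abs_dvd_iff dvd_minus_iff minus_diff_eq mod_eq_dvd_iff mod_mod_trivial)
      thus "(f (b e mod \<bar>c\<bar>), b) \<in> grel (zv {e}) {t \<in> zv {e}. c dvd t e}"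
        using that unfolding grel_def by (auto simp: f_def zv_def)
      show "b e mod \<bar>c\<bar> \<in> {0..<\<bar>c\<bar>}" using c by simp
    qed
    show "(a, a') \<in> grel {0..<\<bar>c\<bar>} {0} \<longleftrightarrow> (f a, f a') \<in> grel (zv {e}) {t \<in> zv {e}. c dvd t e}"
      if "a \<in> {0..<\<bar>c\<bar>}" "a' \<in> {0..<\<bar>c\<bar>}" for a a'
    proof -
      have "c dvd a - a' \<longleftrightarrow> a = a'"
      proof
        assume d: "c dvd a - a'"
        show "a = a'"
        proof (rule ccontr)
          assume "a \<noteq> a'"
          hence "\<bar>c\<bar> \<le> \<bar>a - a'\<bar>" using dvd_imp_le_int d by auto
          thus False using that by auto
        qed
      qed simp
      moreover have "f a - f a' = f (a - a')" by (auto simp: f_def fun_eq_iff)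
      ultimately show ?thesis using that unfolding grel_def by (auto simp: f_def zv_def)
    qed
  qed
  thus "card (zv {e} // grel (zv {e}) {t \<in> zv {e}. c dvd t e}) = nat \<bar>c\<bar>"
    "finite (zv {e} // grel (zv {e}) {t \<in> zv {e}. c dvd t e})"
    using card_quot_eq0[of "{0..<\<bar>c\<bar>}"] c
    by (auto intro: card_fin_transfer[of "{0..<\<bar>c\<bar>} // grel {0..<\<bar>c\<bar>} {0}"])
qed


definition adjV :: "nat set \<Rightarrow> (nat \<Rightarrow> nat \<Rightarrow> nat) \<Rightarrow> nat \<Rightarrow> nat \<Rightarrow> bool" where
  "adjV V x i j \<longleftrightarrow> i \<in> V \<and> j \<in> V \<and> i \<noteq> j \<and> x i j \<noteq> 0"

definition cycV :: "nat set \<Rightarrow> (nat \<Rightarrow> nat \<Rightarrow> nat) \<Rightarrow> bool" where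
  "cycV V x \<longleftrightarrow> (\<exists>vs. distinct vs \<and> 3 \<le> length vs \<and> set vs \<subseteq> V \<and>
      (\<forall>k<length vs. adjV V x (vs ! k) (vs ! ((k + 1) mod length vs))))"

definition treeV :: "nat set \<Rightarrow> (nat \<Rightarrow> nat \<Rightarrow> nat) \<Rightarrow> bool" where
  "treeV V x \<longleftrightarrow> finite V \<and> V \<noteq> {} \<and> (\<forall>i\<in>V. \<forall>j\<in>V. x i j = x j i) \<and>
     (\<forall>i\<in>V. \<forall>j\<in>V. (adjV V x)\<^sup>*\<^sup>* i j) \<and> \<not> cycV V x"

definition pathV :: "nat set \<Rightarrow> (nat \<Rightarrow> nat \<Rightarrow> nat) \<Rightarrow> nat list \<Rightarrow> bool" where
  "pathV V x vs \<longleftrightarrow> distinct vs \<and> set vs \<subseteq> V \<and> (\<forall>k. Suc k < length vs \<longrightarrow> adjV V x (vs ! k) (vs ! Suc k))"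

lemma adj_sym: "(\<forall>i\<in>V. \<forall>j\<in>V. x i j = x j i) \<Longrightarrow> adjV V x i j \<Longrightarrow> adjV V x j i"
  unfolding adjV_def by auto

lemma conn_remove_leaf:
  assumes sym: "\<forall>i\<in>V. \<forall>j\<in>V. x i j = x j i"
    and leaf: "\<And>j. adjV V x l j \<Longrightarrow> j = p" and lp: "l \<noteq> p" "p \<in> V"
    and r: "(adjV V x)\<^sup>*\<^sup>* u v" and u: "u \<in> V" "u \<noteq> l"
  shows "(v \<noteq> l \<longrightarrow> (adjV (V - {l}) x)\<^sup>*\<^sup>* u v) \<and> (v = l \<longrightarrow> (adjV (V - {l}) x)\<^sup>*\<^sup>* u p)"
  using r
proof (induction rule: rtranclp_induct)
  case base thus ?case using u by auto
next
  case (step w v)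
  show ?case
  proof (cases "w = l")
    case True
    hence "v = p" using leaf step(2) by auto
    thus ?thesis using step(3) True lp by auto
  next
    case False
    hence IH: "(adjV (V - {l}) x)\<^sup>*\<^sup>* u w" using step(3) by auto
    show ?thesis
    proof (cases "v = l")
      case True
      hence "w = p" using leaf adj_sym[OF sym step(2)] by auto
      thus ?thesis using IH True by auto
    next
      case vF: False
      have "adjV (V - {l}) x w v" using step(2) False vF unfolding adjV_def by auto
      thus ?thesis using IH vF by (auto intro: rtranclp.rtrancl_into_rtrancl)
    qed
  qed
qed

lemma tree_leaf:
  assumes T: "treeV V x" and c2: "2 \<le> card V"
  shows "\<exists>l p. l \<in> V \<and> p \<in> V \<and> l \<noteq> p \<and> x l p \<noteq> 0 \<and> (\<forall>j. adjV V x l j \<longrightarrow> j = p) \<and> treeV (V - {l}) x"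
proof -
  have fin: "finite V" and sym: "\<forall>i\<in>V. \<forall>j\<in>V. x i j = x j i"
    and con: "\<forall>i\<in>V. \<forall>j\<in>V. (adjV V x)\<^sup>*\<^sup>* i j" and nc: "\<not> cycV V x"
    using T unfolding treeV_def by auto
  obtain a b where ab: "a \<in> V" "b \<in> V" "a \<noteq> b"
    using c2 card_le_Suc0_iff_eq[OF fin] by (metis One_nat_def not_less_eq_eq numeral_2_eq_2)
  have "(adjV V x)\<^sup>*\<^sup>* a b" using con ab by auto
  then obtain c where ac: "adjV V x a c" using ab(3) by (metis converse_rtranclpE)
  have p0: "pathV V x [a, c]" using ac unfolding pathV_def adjV_def by (auto simp: nth_Cons split: nat.splits)
  have bnd: "length vs < card V + 1" if "pathV V x vs \<and> 2 \<le> length vs" for vs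
    using that distinct_card[of vs] card_mono[OF fin, of "set vs"] unfolding pathV_def by auto
  obtain vs where vs: "pathV V x vs" "2 \<le> length vs"
    and mx: "\<And>ws. pathV V x ws \<and> 2 \<le> length ws \<Longrightarrow> length ws \<le> length vs"
    using ex_has_greatest_nat[of "\<lambda>vs. pathV V x vs \<and> 2 \<le> length vs" "[a,c]" length "card V + 1"] p0 bnd
    by auto
  define L where "L = length vs"
  define l where "l = vs ! (L - 1)"
  define p where "p = vs ! (L - 2)"
  have adjpl: "adjV V x p l"
  proof -
    have 1: "Suc (L - 2) < length vs" "Suc (L - 2) = L - 1" using vs(2) unfolding L_def by auto
    have "\<forall>k. Suc k < length vs \<longrightarrow> adjV V x (vs ! k) (vs ! Suc k)" using vs(1) unfolding pathV_def by blast
    hence "adjV V x (vs ! (L - 2)) (vs ! Suc (L - 2))" using 1(1) by blast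
    thus ?thesis unfolding p_def l_def 1(2) .
  qed
  have lV: "l \<in> V" and pV: "p \<in> V" and lp: "l \<noteq> p" using adjpl unfolding adjV_def by auto
  have leaf: "j = p" if "adjV V x l j" for j
  proof (rule ccontr)
    assume jp: "j \<noteq> p"
    show False
    proof (cases "j \<in> set vs")
      case False
      have "pathV V x (vs @ [j])" unfolding pathV_def
      proof (intro conjI allI impI)
        show "distinct (vs @ [j])" using vs(1) False unfolding pathV_def by simp
        show "set (vs @ [j]) \<subseteq> V" using vs(1) that unfolding pathV_def adjV_def by simp
        fix k assume k: "Suc k < length (vs @ [j])"
        show "adjV V x ((vs @ [j]) ! k) ((vs @ [j]) ! Suc k)"
        proof (cases "Suc k < length vs")
          case True
          thus ?thesis using vs(1) unfolding pathV_def by (simp add: nth_append)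
        next
          case F: False
          hence "k = L - 1" using k unfolding L_def by simp
          hence "(vs @ [j]) ! k = l" "(vs @ [j]) ! Suc k = j"
            using vs(2) unfolding l_def L_def by (auto simp: nth_append)
          thus ?thesis using that by simp
        qed
      qed
      hence "length (vs @ [j]) \<le> length vs" using mx[of "vs @ [j]"] vs(2) by simp
      thus False by simp
    next
      case True
      then obtain k where k: "k < L" "vs ! k = j" unfolding L_def by (metis in_set_conv_nth)
      have "j \<noteq> l" using that unfolding adjV_def by auto
      hence "k \<noteq> L - 1" using k l_def by auto
      moreover have "k \<noteq> L - 2" using jp k p_def by auto
      ultimately have k3: "k + 3 \<le> L" using k vs(2) L_def by linarith
      define cs where "cs = drop k vs"
      have lcs: "length cs = L - k" unfolding cs_def L_def by simp
      have "cycV V x" unfolding cycV_def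
      proof (intro exI conjI allI impI)
        show "distinct cs" using vs(1) unfolding cs_def pathV_def by auto
        show "3 \<le> length cs" using lcs k3 by simp
        show "set cs \<subseteq> V" using vs(1) unfolding cs_def pathV_def by (meson set_drop_subset subset_trans)
        fix i assume i: "i < length cs"
        show "adjV V x (cs ! i) (cs ! ((i + 1) mod length cs))"
        proof (cases "i + 1 < length cs")
          case True
          hence "(i + 1) mod length cs = Suc i" by simp
          moreover have "Suc (k + i) < length vs" using True lcs L_def by simp
          ultimately show ?thesis using vs(1) unfolding pathV_def cs_def
            using i lcs L_def by (simp add: add.commute add_Suc_right)
        next
          case False
          hence "i + 1 = length cs" using i by simp
          hence "(i + 1) mod length cs = 0" by simp
          moreover have "cs ! i = l"
          proof -
            have "i + k = length vs - Suc 0" using \<open>i + 1 = length cs\<close> lcs k unfolding L_def by simp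
            thus ?thesis using k unfolding cs_def l_def L_def by (simp add: add.commute)
          qed
          moreover have "cs ! 0 = j" using k unfolding cs_def L_def by simp
          ultimately show ?thesis using that by simp
        qed
      qed
      thus False using nc by simp
    qed
  qed
  have "treeV (V - {l}) x" unfolding treeV_def
  proof (intro conjI)
    show "finite (V - {l})" using fin by simp
    show "V - {l} \<noteq> {}" using pV lp by auto
    show "\<forall>i\<in>V - {l}. \<forall>j\<in>V - {l}. x i j = x j i" using sym by auto
    show "\<forall>i\<in>V - {l}. \<forall>j\<in>V - {l}. (adjV (V - {l}) x)\<^sup>*\<^sup>* i j"
      using conn_remove_leaf[OF sym leaf lp pV] con by blast
    show "\<not> cycV (V - {l}) x"
    proof
      assume "cycV (V - {l}) x"
      hence "cycV V x" unfolding cycV_def adjV_def by blast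
      thus False using nc by simp
    qed
  qed
  thus ?thesis using lV pV lp adjpl leaf adj_sym[OF sym adjpl] unfolding adjV_def by blast
qed


definition EV :: "nat set \<Rightarrow> (nat \<Rightarrow> nat \<Rightarrow> nat) \<Rightarrow> (nat \<times> nat) set" where
  "EV V x = {(i, j). i < j \<and> i \<in> V \<and> j \<in> V \<and> x i j \<noteq> 0}"

definition degV :: "nat set \<Rightarrow> (nat \<Rightarrow> nat \<Rightarrow> nat) \<Rightarrow> nat \<Rightarrow> nat" where
  "degV V x k = card {j \<in> V. j \<noteq> k \<and> x k j \<noteq> 0}"

definition dflow :: "(nat \<times> nat) set \<Rightarrow> ((nat \<times> nat) \<Rightarrow> int) \<Rightarrow> nat \<Rightarrow> int" where
  "dflow E t k = (\<Sum>e\<in>E. (if fst e = k then t e else 0) - (if snd e = k then t e else 0))"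

lemma finite_EV: "finite V \<Longrightarrow> finite (EV V x)"
  by (rule finite_subset[of _ "V \<times> V"]) (auto simp: EV_def)

lemma dflow_insert: "finite E \<Longrightarrow> e \<notin> E \<Longrightarrow>
   dflow (insert e E) t k = dflow E t k + (if fst e = k then t e else 0) - (if snd e = k then t e else 0)"
  unfolding dflow_def by simp

lemma dflow_diff: "dflow E (t - s) k = dflow E t k - dflow E s k"
  unfolding dflow_def by (simp add: sum_subtractf[symmetric]) (rule sum.cong, auto)

lemma dflow_cong: "(\<And>e. e \<in> E \<Longrightarrow> t e = s e) \<Longrightarrow> dflow E t k = dflow E s k"
  unfolding dflow_def by (rule sum.cong) auto

lemma dflow_zero_out: "(\<And>e. e \<in> E \<Longrightarrow> fst e \<noteq> k \<and> snd e \<noteq> k) \<Longrightarrow> dflow E t k = 0"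
  unfolding dflow_def by (rule sum.neutral) auto

locale leafctx =
  fixes V :: "nat set" and x :: "nat \<Rightarrow> nat \<Rightarrow> nat" and l p :: nat
  assumes T: "treeV V x" and lV: "l \<in> V" and pV: "p \<in> V" and lp: "l \<noteq> p" and xlp: "x l p \<noteq> 0"
    and leaf: "\<And>j. adjV V x l j \<Longrightarrow> j = p" and T': "treeV (V - {l}) x"
begin

abbreviation "V' \<equiv> V - {l}"
definition "e0 = (min l p, max l p)"
definition "sg = (if l < p then 1 else - 1 :: int)"

lemma finV: "finite V" using T by (simp add: treeV_def)
lemma sym: "\<forall>i\<in>V. \<forall>j\<in>V. x i j = x j i" using T by (simp add: treeV_def)

lemma symx: "i \<in> V \<Longrightarrow> j \<in> V \<Longrightarrow> x i j = x j i" using sym by blast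

lemma xpl: "x p l \<noteq> 0" using symx[OF lV pV] xlp by simp

lemma xl: "j \<in> V \<Longrightarrow> j \<noteq> l \<Longrightarrow> x l j \<noteq> 0 \<Longrightarrow> j = p"
  using leaf unfolding adjV_def using lV by auto

lemma xl': "j \<in> V \<Longrightarrow> j \<noteq> l \<Longrightarrow> x j l \<noteq> 0 \<Longrightarrow> j = p"
  using xl symx lV by fastforce

lemma EV_split: "EV V x = insert e0 (EV V' x)" and e0_notin: "e0 \<notin> EV V' x"
proof -
  show "EV V x = insert e0 (EV V' x)"
  proof
    show "EV V x \<subseteq> insert e0 (EV V' x)"
    proof
      fix e assume "e \<in> EV V x"
      then obtain i j where e: "e = (i, j)" "i < j" "i \<in> V" "j \<in> V" "x i j \<noteq> 0" by (auto simp: EV_def)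
      show "e \<in> insert e0 (EV V' x)"
      proof (cases "i = l \<or> j = l")
        case True
        hence "e = e0"
        proof
          assume "i = l"
          hence "j = p" using xl[of j] e by simp
          thus "e = e0" using e \<open>i = l\<close> unfolding e0_def by simp
        next
          assume "j = l"
          hence "i = p" using xl'[of i] e by simp
          thus "e = e0" using e \<open>j = l\<close> unfolding e0_def by simp
        qed
        thus ?thesis by simp
      next
        case False thus ?thesis using e by (auto simp: EV_def)
      qed
    qed
    show "insert e0 (EV V' x) \<subseteq> EV V x"
      using lV pV lp xlp xpl unfolding e0_def by (auto simp: EV_def min_def max_def)
  qed
  show "e0 \<notin> EV V' x" unfolding e0_def EV_def by (auto simp: min_def max_def)
qed

lemma finE': "finite (EV V' x)" using finV by (simp add: finite_EV)

lemma E'_nol: "e \<in> EV V' x \<Longrightarrow> fst e \<noteq> l \<and> snd e \<noteq> l"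
  by (auto simp: EV_def)

lemma sg2: "sg * sg = 1" by (simp add: sg_def)

lemma dflow_E: "dflow (EV V x) t k = dflow (EV V' x) t k + (if fst e0 = k then t e0 else 0) - (if snd e0 = k then t e0 else 0)"
  unfolding EV_split by (rule dflow_insert[OF finE' e0_notin])

lemma dflow_l: "dflow (EV V x) t l = sg * t e0"
proof -
  have "dflow (EV V' x) t l = 0" by (rule dflow_zero_out) (use E'_nol in blast)
  thus ?thesis unfolding dflow_E using lp by (simp add: e0_def sg_def min_def max_def)
qed

lemma dflow_p: "dflow (EV V x) t p = dflow (EV V' x) t p - sg * t e0"
  unfolding dflow_E using lp by (simp add: e0_def sg_def min_def max_def)

lemma dflow_k: "k \<noteq> l \<Longrightarrow> k \<noteq> p \<Longrightarrow> dflow (EV V x) t k = dflow (EV V' x) t k"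
  unfolding dflow_E by (simp add: e0_def min_def max_def)

lemma deg_other: "k \<in> V' \<Longrightarrow> k \<noteq> p \<Longrightarrow> degV V x k = degV V' x k"
proof -
  assume k: "k \<in> V'" "k \<noteq> p"
  have "{j \<in> V. j \<noteq> k \<and> x k j \<noteq> 0} = {j \<in> V'. j \<noteq> k \<and> x k j \<noteq> 0}"
    using k xl' by blast
  thus ?thesis by (simp add: degV_def)
qed

lemma deg_p: "degV V x p = Suc (degV V' x p)"
proof -
  have "{j \<in> V. j \<noteq> p \<and> x p j \<noteq> 0} = insert l {j \<in> V'. j \<noteq> p \<and> x p j \<noteq> 0}"
    using lV lp xpl pV by auto
  moreover have "finite {j \<in> V'. j \<noteq> p \<and> x p j \<noteq> 0}" using finV by simp
  ultimately show ?thesis by (simp add: degV_def)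
qed

lemma deg_l: "degV V x l = 1"
proof -
  have "{j \<in> V. j \<noteq> l \<and> x l j \<noteq> 0} = {p}"
  proof (intro equalityI subsetI)
    fix j assume "j \<in> {j \<in> V. j \<noteq> l \<and> x l j \<noteq> 0}"
    thus "j \<in> {p}" using xl[of j] by simp
  qed (use lp pV xlp in auto)
  thus ?thesis by (simp add: degV_def)
qed

lemma card2: "2 \<le> card V"
proof -
  have "{l, p} \<subseteq> V" using lV pV by auto
  moreover have "card {l, p} = 2" using lp by simp
  ultimately show ?thesis using card_mono[OF finV] by metis
qed

lemma cardV': "card V' < card V" using finV lV card2 by simp

end


definition Qvec :: "nat set \<Rightarrow> (nat \<Rightarrow> nat \<Rightarrow> nat) \<Rightarrow> (nat \<Rightarrow> int) \<Rightarrow> (nat \<Rightarrow> int) \<Rightarrow> (nat \<times> nat \<Rightarrow> int)" where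
  "Qvec V x r y = (\<lambda>e. if e \<in> EV V x then int (x (fst e) (snd e)) * (r (snd e) * y (fst e) - r (fst e) * y (snd e)) else 0)"

definition Qset :: "nat set \<Rightarrow> (nat \<Rightarrow> nat \<Rightarrow> nat) \<Rightarrow> (nat \<Rightarrow> int) \<Rightarrow> (nat \<times> nat \<Rightarrow> int) set" where
  "Qset V x r = range (Qvec V x r)"

lemma Qvec_diff: "Qvec V x r y - Qvec V x r y' = Qvec V x r (y - y')"
  by (simp add: Qvec_def algebra_simps fun_eq_iff)

lemma Qvec_0: "Qvec V x r 0 = 0"
  by (simp add: Qvec_def fun_eq_iff)

lemma sgrp_Qset: "sgrp (Qset V x r)"
  unfolding sgrp_def Qset_def
proof (intro conjI ballI)
  show "0 \<in> range (Qvec V x r)" using Qvec_0[of V x r] by (simp add: image_iff) (metis)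
  fix a b assume "a \<in> range (Qvec V x r)" "b \<in> range (Qvec V x r)"
  then obtain y y' where "a = Qvec V x r y" "b = Qvec V x r y'" by blast
  thus "a - b \<in> range (Qvec V x r)" using Qvec_diff[of V x r y y'] by simp
qed

lemma Qset_sub: "Qset V x r \<subseteq> zv (EV V x)"
  by (auto simp: Qset_def Qvec_def zv_def)

lemma tree_cong:
  assumes "treeV V x" "\<forall>i\<in>V. \<forall>j\<in>V. x' i j = x' j i" "\<And>i j. x' i j \<noteq> 0 \<longleftrightarrow> x i j \<noteq> 0"
  shows "treeV V x'"
proof -
  have "adjV V x' = adjV V x" using assms(3) by (auto simp: adjV_def fun_eq_iff)
  moreover have "cycV V x' = cycV V x" unfolding cycV_def calculation ..
  ultimately show ?thesis using assms unfolding treeV_def by simp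
qed

lemma EV_cong: "(\<And>i j. x' i j \<noteq> 0 \<longleftrightarrow> x i j \<noteq> 0) \<Longrightarrow> EV V x' = EV V x"
  by (auto simp: EV_def)

lemma degV_cong: "(\<And>i j. x' i j \<noteq> 0 \<longleftrightarrow> x i j \<noteq> 0) \<Longrightarrow> degV V x' = degV V x"
  by (auto simp: degV_def fun_eq_iff)

lemma tree_single: "treeV V x \<Longrightarrow> card V = 1 \<Longrightarrow> \<exists>v. V = {v} \<and> EV V x = {}"
  by (auto simp: card_Suc_eq EV_def)

lemma card_edges_at:
  assumes sym: "\<forall>i\<in>V. \<forall>j\<in>V. x i j = x j i" and pV: "p \<in> V"
  shows "card {e \<in> EV V x. fst e = p \<or> snd e = p} = degV V x p"
proof -
  have "bij_betw (\<lambda>j. (min p j, max p j)) {j \<in> V. j \<noteq> p \<and> x p j \<noteq> 0} {e \<in> EV V x. fst e = p \<or> snd e = p}"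
  proof (rule bij_betw_imageI)
    show "inj_on (\<lambda>j. (min p j, max p j)) {j \<in> V. j \<noteq> p \<and> x p j \<noteq> 0}"
    proof (rule inj_onI)
      fix a b assume "a \<in> {j \<in> V. j \<noteq> p \<and> x p j \<noteq> 0}" "b \<in> {j \<in> V. j \<noteq> p \<and> x p j \<noteq> 0}"
        "(min p a, max p a) = (min p b, max p b)"
      thus "a = b" by (simp add: min_def max_def split: if_splits)
    qed
    show "(\<lambda>j. (min p j, max p j)) ` {j \<in> V. j \<noteq> p \<and> x p j \<noteq> 0} = {e \<in> EV V x. fst e = p \<or> snd e = p}"
    proof (intro equalityI subsetI)
      fix e assume "e \<in> (\<lambda>j. (min p j, max p j)) ` {j \<in> V. j \<noteq> p \<and> x p j \<noteq> 0}"
      then obtain j where j: "j \<in> V" "j \<noteq> p" "x p j \<noteq> 0" "e = (min p j, max p j)" by blast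
      have "x j p = x p j" using sym j(1) pV by blast
      hence "x j p \<noteq> 0" using j(3) by simp
      show "e \<in> {e \<in> EV V x. fst e = p \<or> snd e = p}"
      proof (cases "p < j")
        case True thus ?thesis using j pV by (simp add: EV_def)
      next
        case False hence "j < p" using j(2) by simp
        thus ?thesis using j pV \<open>x j p \<noteq> 0\<close> by (simp add: EV_def)
      qed
    next
      fix e assume e: "e \<in> {e \<in> EV V x. fst e = p \<or> snd e = p}"
      then obtain i j where ij: "e = (i, j)" "i < j" "i \<in> V" "j \<in> V" "x i j \<noteq> 0" "i = p \<or> j = p"
        by (auto simp: EV_def)
      show "e \<in> (\<lambda>j. (min p j, max p j)) ` {j \<in> V. j \<noteq> p \<and> x p j \<noteq> 0}"
      proof (cases "i = p")
        case True
        hence "e = (min p j, max p j)" "j \<in> {j \<in> V. j \<noteq> p \<and> x p j \<noteq> 0}" using ij by auto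
        thus ?thesis by (rule rev_image_eqI[rotated])
      next
        case False
        hence "j = p" using ij by auto
        moreover have "x p i \<noteq> 0"
        proof -
          have "x p i = x i p" using sym ij(3) pV by blast
          thus ?thesis using ij(5) \<open>j = p\<close> by simp
        qed
        ultimately have "e = (min p i, max p i)" "i \<in> {j \<in> V. j \<noteq> p \<and> x p j \<noteq> 0}" using ij by auto
        thus ?thesis by (rule rev_image_eqI[rotated])
      qed
    qed
  qed
  thus ?thesis unfolding degV_def by (simp add: bij_betw_same_card)
qed


context leafctx
begin

lemma e0_cases: "(fst e0 = l \<and> snd e0 = p) \<or> (fst e0 = p \<and> snd e0 = l)"
  unfolding e0_def by (auto simp: min_def max_def)

lemma e0_in: "e0 \<in> EV V x" using EV_split by auto

lemma x_e0: "x (fst e0) (snd e0) = x l p"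
  using e0_cases symx[OF lV pV] by auto

lemma EV'_in: "e \<in> EV V' x \<Longrightarrow> e \<in> EV V x" using EV_split by auto

lemma Q_step:
  fixes r :: "nat \<Rightarrow> int"
  assumes rpos: "\<forall>k\<in>V. r k > 0"
  defines "h \<equiv> gcd (r p) (r l)"
  defines "c \<equiv> r p div h"
  defines "x' \<equiv> (\<lambda>i j. if i = p \<or> j = p then x i j * nat c else x i j)"
  defines "r' \<equiv> r(p := h)"
  shows "rs {e0} ` Qset V x r = {t \<in> zv {e0}. (int (x l p) * h) dvd t e0}"
    and "Qset V x r \<inter> zv (EV V' x) = Qset V' x' r'"
proof -
  have rp: "r p > 0" and rl: "r l > 0" using rpos lV pV by auto
  have hpos: "h > 0" unfolding h_def using rp by simp
  have hp: "h dvd r p" and hl: "h dvd r l" unfolding h_def by auto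
  have ch: "c * h = r p" unfolding c_def using hp by simp
  have cpos: "c > 0"
  proof -
    have "0 < c * h" using ch rp by simp
    thus ?thesis using hpos by (simp add: zero_less_mult_iff)
  qed
  define cl where "cl = r l div h"
  have clh: "cl * h = r l" unfolding cl_def using hl by simp
  have cop: "coprime c cl" unfolding c_def cl_def h_def using div_gcd_coprime[of "r p" "r l"] rp by simp
  define a where "a = fst e0"
  define b where "b = snd e0"
  have ab: "(a = l \<and> b = p) \<or> (a = p \<and> b = l)" unfolding a_def b_def using e0_cases .
  have xab: "x a b = x l p" unfolding a_def b_def by (rule x_e0)
  have e0ab: "e0 = (a, b)" unfolding a_def b_def by simp
  have gab: "gcd (r b) (r a) = h" using ab unfolding h_def by (auto simp: gcd.commute)
  have Qe0: "Qvec V x r y e0 = int (x l p) * (r b * y a - r a * y b)" for y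
    using e0_in xab unfolding Qvec_def a_def b_def by simp
  show "rs {e0} ` Qset V x r = {t \<in> zv {e0}. (int (x l p) * h) dvd t e0}"
  proof (intro equalityI subsetI)
    fix t assume "t \<in> rs {e0} ` Qset V x r"
    then obtain y where t: "t = rs {e0} (Qvec V x r y)" by (auto simp: Qset_def)
    have "h dvd r b" "h dvd r a" using ab hp hl by auto
    hence "h dvd r b * y a - r a * y b" by simp
    hence "int (x l p) * h dvd t e0" using t Qe0[of y] by (simp add: rs_def mult_dvd_mono)
    moreover have "t \<in> zv {e0}" using t by (simp add: rs_def zv_def)
    ultimately show "t \<in> {t \<in> zv {e0}. (int (x l p) * h) dvd t e0}" by simp
  next
    fix t assume "t \<in> {t \<in> zv {e0}. (int (x l p) * h) dvd t e0}"
    then obtain q where t: "t \<in> zv {e0}" "t e0 = int (x l p) * h * q" by (auto elim!: dvdE)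
    obtain u v where uv: "u * r b + v * r a = h" using bezout_int[of "r b" "r a"] gab by auto
    have abne: "a \<noteq> b" using ab lp by auto
    define y where "y = (\<lambda>k. if k = a then u * q else if k = b then - (v * q) else 0)"
    have "rs {e0} (Qvec V x r y) = t"
    proof
      fix e show "rs {e0} (Qvec V x r y) e = t e"
      proof (cases "e = e0")
        case True
        have "Qvec V x r y e0 = int (x l p) * ((u * r b + v * r a) * q)"
          unfolding Qe0 y_def using abne by (simp add: algebra_simps)
        thus ?thesis using True t uv by (simp add: rs_def)
      next
        case False
        have "t e = 0" using t(1) False unfolding zv_def by blast
        thus ?thesis using False by (simp add: rs_def)
      qed
    qed
    thus "t \<in> rs {e0} ` Qset V x r" unfolding Qset_def by blast
  qed
  have xnz: "x' i j \<noteq> 0 \<longleftrightarrow> x i j \<noteq> 0" for i j using cpos unfolding x'_def by auto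
  have EV': "EV V' x' = EV V' x" by (rule EV_cong[OF xnz])
  have Qeq: "Qvec V x r y = Qvec V' x' r' y'"
    if yy: "\<And>k. k \<noteq> l \<Longrightarrow> k \<noteq> p \<Longrightarrow> y k = y' k" and yp: "y p = c * y' p"
      and rel: "r p * y l = r l * y p" for y y'
  proof
    fix e
    show "Qvec V x r y e = Qvec V' x' r' y' e"
    proof (cases "e \<in> EV V' x")
      case True
      then obtain i j where e: "e = (i, j)" "i < j" "i \<in> V'" "j \<in> V'" by (auto simp: EV_def)
      have L: "Qvec V x r y e = int (x i j) * (r j * y i - r i * y j)"
        using EV'_in[OF True] e unfolding Qvec_def by simp
      have R: "Qvec V' x' r' y' e = int (x' i j) * (r' j * y' i - r' i * y' j)"
        using True e EV' unfolding Qvec_def by simp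
      show ?thesis
      proof (cases "i = p")
        case True
        hence "j \<noteq> p" "j \<noteq> l" "i \<noteq> l" using e by auto
        thus ?thesis unfolding L R using True yy[of j] yp ch cpos
          by (simp add: x'_def r'_def algebra_simps)
      next
        case iF: False
        show ?thesis
        proof (cases "j = p")
          case True
          hence "i \<noteq> l" "i \<noteq> p" using e by auto
          thus ?thesis unfolding L R using True yy[of i] yp ch cpos
            by (simp add: x'_def r'_def algebra_simps)
        next
          case False
          hence "i \<noteq> l" "j \<noteq> l" using e by auto
          thus ?thesis unfolding L R using False iF yy[of i] yy[of j]
            by (simp add: x'_def r'_def)
        qed
      qed
    next
      case False
      hence R: "Qvec V' x' r' y' e = 0" using EV' unfolding Qvec_def by simp
      show ?thesis
      proof (cases "e = e0")
        case True
        have "r b * y a - r a * y b = 0" using ab rel by (auto simp: algebra_simps)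
        thus ?thesis using True R Qe0 by simp
      next
        case eF: False
        hence "e \<notin> EV V x" using False EV_split by auto
        thus ?thesis using R unfolding Qvec_def by simp
      qed
    qed
  qed
  show "Qset V x r \<inter> zv (EV V' x) = Qset V' x' r'"
  proof (intro equalityI subsetI)
    fix t assume "t \<in> Qset V x r \<inter> zv (EV V' x)"
    then obtain y where t: "t = Qvec V x r y" "t \<in> zv (EV V' x)" by (auto simp: Qset_def)
    have "t e0 = 0" using t(2) e0_notin unfolding zv_def by blast
    hence "r b * y a - r a * y b = 0" using Qe0[of y] t(1) xlp by simp
    hence rel: "r p * y l = r l * y p" using ab by (auto simp: algebra_simps)
    have "c dvd y p"
    proof -
      have "h * (c * y l) = h * (cl * y p)"
      proof -
        have "h * (c * y l) = r p * y l" using ch by (simp add: algebra_simps)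
        also have "\<dots> = r l * y p" by (rule rel)
        also have "\<dots> = h * (cl * y p)" using clh by (simp add: algebra_simps)
        finally show ?thesis .
      qed
      hence "c * y l = cl * y p" using hpos by simp
      hence "c dvd cl * y p" by (metis dvd_triv_left)
      thus ?thesis using cop by (simp add: coprime_dvd_mult_right_iff)
    qed
    then obtain z where z: "y p = c * z" by (auto elim: dvdE)
    have "t = Qvec V' x' r' (y(p := z))"
      unfolding t(1) by (rule Qeq) (use z rel in auto)
    thus "t \<in> Qset V' x' r'" by (simp add: Qset_def)
  next
    fix t assume "t \<in> Qset V' x' r'"
    then obtain y' where t: "t = Qvec V' x' r' y'" by (auto simp: Qset_def)
    define y where "y = y'(p := c * y' p, l := cl * y' p)"
    have "Qvec V x r y = Qvec V' x' r' y'"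
    proof (rule Qeq)
      show "y p = c * y' p" using lp unfolding y_def by simp
      show "r p * y l = r l * y p" using lp unfolding y_def by (simp add: ch[symmetric] clh[symmetric] algebra_simps)
    qed (simp add: y_def)
    moreover have "t \<in> zv (EV V' x)" using t Qset_sub[of V' x' r'] EV' by (auto simp: Qset_def)
    ultimately show "t \<in> Qset V x r \<inter> zv (EV V' x)" using t unfolding Qset_def by (metis IntI rangeI)
  qed
qed

end


definition QF :: "nat set \<Rightarrow> (nat \<Rightarrow> nat \<Rightarrow> nat) \<Rightarrow> (nat \<Rightarrow> int) \<Rightarrow> rat" where
  "QF V x r = (\<Prod>e\<in>EV V x. rat_of_nat (x (fst e) (snd e))) *
     (\<Prod>k\<in>V. rat_of_int (r k) powi (int (degV V x k) - 1)) * rat_of_int (Gcd (r ` V))"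

lemma prod_if_const:
  assumes "finite A"
  shows "(\<Prod>e\<in>A. if P e then (c::rat) else 1) = c ^ card {e \<in> A. P e}"
proof -
  have "(\<Prod>e\<in>A. if P e then c else 1) = (\<Prod>e\<in>A \<inter> {e. P e}. c) * (\<Prod>e\<in>A \<inter> - {e. P e}. 1)"
    by (rule prod.If_cases[OF assms])
  also have "A \<inter> {e. P e} = {e \<in> A. P e}" by auto
  finally show ?thesis by simp
qed

lemma Q_index:
  assumes "treeV V x" "\<forall>k\<in>V. r k > 0"
  shows "rat_of_nat (idx (zv (EV V x)) (Qset V x r)) = QF V x r \<and>
         finite (zv (EV V x) // grel (zv (EV V x)) (Qset V x r))"
  using assms
proof (induction "card V" arbitrary: V x r rule: less_induct)
  case less
  have finV: "finite V" and neV: "V \<noteq> {}" using less.prems(1) by (auto simp: treeV_def)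
  show ?case
  proof (cases "card V = 1")
    case True
    obtain v where v: "V = {v}" "EV V x = {}" using tree_single[OF less.prems(1) True] by blast
    have "card (zv (EV V x) // grel (zv (EV V x)) (Qset V x r)) = 1 \<and> finite (zv (EV V x) // grel (zv (EV V x)) (Qset V x r))"
      unfolding v(2) by (rule idx_empty[OF sgrp_Qset])
    moreover have "QF V x r = 1"
    proof -
      have "degV V x v = 0" unfolding v(1) degV_def by simp
      moreover have "r v > 0" using less.prems(2) v(1) by simp
      ultimately show ?thesis unfolding QF_def v(2) unfolding v(1) by simp
    qed
    ultimately show ?thesis by (simp add: idx_def)
  next
    case False
    have "card V \<noteq> 0" using finV neV by simp
    hence c2: "2 \<le> card V" using False by linarith
    obtain l p where lp: "l \<in> V" "p \<in> V" "l \<noteq> p" "x l p \<noteq> 0" "\<forall>j. adjV V x l j \<longrightarrow> j = p" "treeV (V - {l}) x"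
      using tree_leaf[OF less.prems(1) c2] by blast
    interpret lc: leafctx V x l p using lp less.prems(1) by unfold_locales auto
    let ?V' = "V - {l}"
    define h where "h = gcd (r p) (r l)"
    define c where "c = r p div h"
    define x' where "x' = (\<lambda>i j. if i = p \<or> j = p then x i j * nat c else x i j)"
    define r' where "r' = r(p := h)"
    have rp: "r p > 0" and rl: "r l > 0" using less.prems(2) lp by auto
    have hpos: "h > 0" unfolding h_def using rp by simp
    have hp: "h dvd r p" and hl: "h dvd r l" unfolding h_def by auto
    have ch: "c * h = r p" unfolding c_def using hp by simp
    have cpos: "c > 0"
    proof -
      have "0 < c * h" using ch rp by simp
      thus ?thesis using hpos by (simp add: zero_less_mult_iff)
    qed
    have xnz: "x' i j \<noteq> 0 \<longleftrightarrow> x i j \<noteq> 0" for i j using cpos unfolding x'_def by auto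
    have EV': "EV ?V' x' = EV ?V' x" by (rule EV_cong[OF xnz])
    have dg': "degV ?V' x' = degV ?V' x" by (rule degV_cong[OF xnz])
    have T'': "treeV ?V' x'"
    proof (rule tree_cong[OF lp(6) _ xnz])
      show "\<forall>i\<in>?V'. \<forall>j\<in>?V'. x' i j = x' j i"
      proof (intro ballI)
        fix i j assume "i \<in> ?V'" "j \<in> ?V'"
        hence "x i j = x j i" using lc.symx by blast
        thus "x' i j = x' j i" unfolding x'_def by auto
      qed
    qed
    have symV': "\<forall>i\<in>?V'. \<forall>j\<in>?V'. x i j = x j i" using lc.symx by blast
    have r'pos: "\<forall>k\<in>?V'. r' k > 0" using less.prems(2) hpos unfolding r'_def by auto
    have IH: "rat_of_nat (idx (zv (EV ?V' x')) (Qset ?V' x' r')) = QF ?V' x' r' \<and>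
         finite (zv (EV ?V' x') // grel (zv (EV ?V' x')) (Qset ?V' x' r'))"
      by (rule less.hyps[OF lc.cardV' T'' r'pos])
    note st = lc.Q_step[OF less.prems(2), folded h_def, folded c_def, folded x'_def r'_def]
    have m0: "int (x l p) * h \<noteq> 0" using lp(4) hpos by simp
    have E: "EV V x = {lc.e0} \<union> EV ?V' x" using lc.EV_split by simp
    have fib: "idx (zv ({lc.e0} \<union> EV ?V' x)) (Qset V x r) =
        idx (zv {lc.e0}) (rs {lc.e0} ` Qset V x r) * idx (zv (EV ?V' x)) (Qset V x r \<inter> zv (EV ?V' x))"
      "finite (zv ({lc.e0} \<union> EV ?V' x) // grel (zv ({lc.e0} \<union> EV ?V' x)) (Qset V x r))"
    proof -
      have d: "{lc.e0} \<inter> EV ?V' x = {}" using lc.e0_notin by simp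
      have s: "Qset V x r \<subseteq> zv ({lc.e0} \<union> EV ?V' x)" using Qset_sub[of V x r] E by simp
      have f1: "finite (zv {lc.e0} // grel (zv {lc.e0}) (rs {lc.e0} ` Qset V x r))"
        unfolding st(1) by (rule idx_single(2)[OF m0])
      have f2: "finite (zv (EV ?V' x) // grel (zv (EV ?V' x)) (Qset V x r \<inter> zv (EV ?V' x)))"
        unfolding st(2) using IH EV' by simp
      show "idx (zv ({lc.e0} \<union> EV ?V' x)) (Qset V x r) =
        idx (zv {lc.e0}) (rs {lc.e0} ` Qset V x r) * idx (zv (EV ?V' x)) (Qset V x r \<inter> zv (EV ?V' x))"
        by (rule fibration(1)[OF d sgrp_Qset s f1 f2])
      show "finite (zv ({lc.e0} \<union> EV ?V' x) // grel (zv ({lc.e0} \<union> EV ?V' x)) (Qset V x r))"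
        by (rule fibration(2)[OF d sgrp_Qset s f1 f2])
    qed
    have idxeq: "rat_of_nat (idx (zv (EV V x)) (Qset V x r)) = rat_of_int (int (x l p) * h) * QF ?V' x' r'"
    proof -
      have "idx (zv {lc.e0}) (rs {lc.e0} ` Qset V x r) = nat \<bar>int (x l p) * h\<bar>"
        unfolding idx_def st(1) by (rule idx_single(1)[OF m0])
      moreover have "rat_of_nat (nat (int (x l p) * h)) = rat_of_nat (x l p) * rat_of_int h"
      proof -
        have "int (x l p) * h \<ge> 0" using hpos by simp
        hence "rat_of_nat (nat (int (x l p) * h)) = rat_of_int (int (x l p) * h)" by (simp only: of_nat_nat)
        thus ?thesis by simp
      qed
      ultimately show ?thesis using fib(1) IH E st(2) EV' by simp
    qed
    define D where "D = degV ?V' x p"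
    define W where "W = ?V' - {p}"
    define P0 where "P0 = (\<Prod>k\<in>W. rat_of_int (r k) powi (int (degV V x k) - 1))"
    define G0 where "G0 = Gcd (r ` W)"
    define X0 where "X0 = (\<Prod>e\<in>EV ?V' x. rat_of_nat (x (fst e) (snd e)))"
    have pV': "p \<in> ?V'" using lp by auto
    have finV': "finite ?V'" using finV by simp
    have finW: "finite W" unfolding W_def using finV by simp
    have V'W: "?V' = insert p W" "p \<notin> W" unfolding W_def using pV' by auto
    have VW: "V = insert l (insert p W)" "l \<notin> insert p W" unfolding W_def using lp by auto
    have A: "(\<Prod>e\<in>EV ?V' x'. rat_of_nat (x' (fst e) (snd e))) = X0 * rat_of_int c ^ D"
    proof -
      have "(\<Prod>e\<in>EV ?V' x'. rat_of_nat (x' (fst e) (snd e))) =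
            (\<Prod>e\<in>EV ?V' x. rat_of_nat (x (fst e) (snd e)) * (if fst e = p \<or> snd e = p then rat_of_int c else 1))"
        unfolding EV' using cpos by (intro prod.cong) (auto simp: x'_def)
      also have "\<dots> = X0 * (\<Prod>e\<in>EV ?V' x. if fst e = p \<or> snd e = p then rat_of_int c else 1)"
        unfolding X0_def by (rule prod.distrib)
      also have "(\<Prod>e\<in>EV ?V' x. if fst e = p \<or> snd e = p then rat_of_int c else 1) = rat_of_int c ^ D"
        unfolding D_def using prod_if_const[OF lc.finE'] card_edges_at[OF symV' pV'] by simp
      finally show ?thesis .
    qed
    have B: "(\<Prod>k\<in>?V'. rat_of_int (r' k) powi (int (degV ?V' x' k) - 1)) = rat_of_int h powi (int D - 1) * P0"
    proof -
      have "(\<Prod>k\<in>?V'. rat_of_int (r' k) powi (int (degV ?V' x' k) - 1)) =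
           rat_of_int (r' p) powi (int (degV ?V' x' p) - 1) * (\<Prod>k\<in>W. rat_of_int (r' k) powi (int (degV ?V' x' k) - 1))"
        unfolding V'W(1) using prod.insert[OF finW V'W(2)] by simp
      moreover have "(\<Prod>k\<in>W. rat_of_int (r' k) powi (int (degV ?V' x' k) - 1)) = P0"
        unfolding P0_def dg' by (rule prod.cong) (auto simp: W_def r'_def lc.deg_other)
      ultimately show ?thesis by (simp add: r'_def D_def dg')
    qed
    have C: "Gcd (r' ` ?V') = gcd h G0"
    proof -
      have "r' ` ?V' = insert h (r ` W)" unfolding V'W(1) r'_def using V'W(2) by auto
      thus ?thesis by (simp add: G0_def)
    qed
    have QF': "QF ?V' x' r' = X0 * rat_of_int c ^ D * (rat_of_int h powi (int D - 1) * P0) * rat_of_int (gcd h G0)"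
      unfolding QF_def A B C by simp
    have QFV: "QF V x r = rat_of_nat (x l p) * X0 * (rat_of_int (r p) ^ D * P0) * rat_of_int (gcd h G0)"
    proof -
      have 1: "(\<Prod>e\<in>EV V x. rat_of_nat (x (fst e) (snd e))) = rat_of_nat (x l p) * X0"
        unfolding X0_def lc.EV_split prod.insert[OF lc.finE' lc.e0_notin] lc.x_e0 ..
      have 2: "(\<Prod>k\<in>V. rat_of_int (r k) powi (int (degV V x k) - 1)) = rat_of_int (r p) ^ D * P0"
      proof -
        have "(\<Prod>k\<in>V. rat_of_int (r k) powi (int (degV V x k) - 1)) =
           rat_of_int (r l) powi (int (degV V x l) - 1) * (rat_of_int (r p) powi (int (degV V x p) - 1) * P0)"
          unfolding VW(1) P0_def using finW V'W(2) VW(2) by simp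
        thus ?thesis using lc.deg_l lc.deg_p unfolding D_def by simp
      qed
      have 3: "Gcd (r ` V) = gcd h G0"
        unfolding VW(1) G0_def h_def by (simp add: gcd.assoc gcd.left_commute gcd.commute)
      show ?thesis unfolding QF_def 1 2 3 by simp
    qed
    have "rat_of_int (int (x l p) * h) * QF ?V' x' r' = QF V x r"
    proof -
      have hq: "rat_of_int h \<noteq> 0" using hpos by simp
      have "rat_of_int h * rat_of_int h powi (int D - 1) = rat_of_int h ^ D"
        using power_int_minus_mult[of "rat_of_int h" "int D"] hq by (simp add: mult.commute)
      moreover have "rat_of_int (r p) ^ D = rat_of_int c ^ D * rat_of_int h ^ D"
        using ch by (metis of_int_mult power_mult_distrib)
      ultimately show ?thesis unfolding QF' QFV by (simp add: algebra_simps)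
    qed
    thus ?thesis using idxeq fib(2) E by simp
  qed
qed


definition Pset :: "nat set \<Rightarrow> (nat \<Rightarrow> nat \<Rightarrow> nat) \<Rightarrow> (nat \<Rightarrow> int) \<Rightarrow> (nat \<times> nat \<Rightarrow> int) set" where
  "Pset V x r = {t \<in> zv (EV V x). \<forall>k\<in>V. r k dvd dflow (EV V x) t k}"

definition PF :: "nat set \<Rightarrow> (nat \<Rightarrow> int) \<Rightarrow> rat" where
  "PF V r = (\<Prod>k\<in>V. rat_of_int (r k)) / rat_of_int (Gcd (r ` V))"

lemma sgrp_Pset: "sgrp (Pset V x r)"
  unfolding sgrp_def Pset_def
proof (intro conjI ballI)
  have "dflow (EV V x) 0 k = 0" for k unfolding dflow_def by (intro sum.neutral) (auto simp: zero_fun_def)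
  thus "0 \<in> {t \<in> zv (EV V x). \<forall>k\<in>V. r k dvd dflow (EV V x) t k}" by simp
  fix a b assume a: "a \<in> {t \<in> zv (EV V x). \<forall>k\<in>V. r k dvd dflow (EV V x) t k}"
    and b: "b \<in> {t \<in> zv (EV V x). \<forall>k\<in>V. r k dvd dflow (EV V x) t k}"
  have "a - b \<in> zv (EV V x)" using a b sgrp_diff[OF sgrp_zv] by blast
  moreover have "\<forall>k\<in>V. r k dvd dflow (EV V x) (a - b) k" using a b by (simp add: dflow_diff)
  ultimately show "a - b \<in> {t \<in> zv (EV V x). \<forall>k\<in>V. r k dvd dflow (EV V x) t k}" by simp
qed

lemma Pset_sub: "Pset V x r \<subseteq> zv (EV V x)" by (auto simp: Pset_def)

context leafctx
begin

lemma sg_dvd: "a dvd sg * b \<longleftrightarrow> a dvd b"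
  unfolding sg_def by auto

lemma dflow_zero_on: "(\<And>e. e \<in> E \<Longrightarrow> t e = 0) \<Longrightarrow> dflow E t k = 0"
  unfolding dflow_def by (rule sum.neutral) auto

lemma P_step:
  fixes r :: "nat \<Rightarrow> int"
  assumes rpos: "\<forall>k\<in>V. r k > 0"
  defines "h \<equiv> gcd (r p) (r l)"
  defines "r' \<equiv> r(p := h)"
  shows "rs (EV V' x) ` Pset V x r = Pset V' x r'"
    and "Pset V x r \<inter> zv {e0} = {t \<in> zv {e0}. lcm (r l) (r p) dvd t e0}"
proof -
  have hp: "h dvd r p" and hl: "h dvd r l" unfolding h_def by auto
  show "rs (EV V' x) ` Pset V x r = Pset V' x r'"
  proof (intro equalityI subsetI)
    fix t' assume "t' \<in> rs (EV V' x) ` Pset V x r"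
    then obtain t where t: "t' = rs (EV V' x) t" "t \<in> Pset V x r" by blast
    have df: "dflow (EV V' x) t' k = dflow (EV V' x) t k" for k
      unfolding t(1) by (rule dflow_cong) (simp add: rs_def)
    have dv: "r k dvd dflow (EV V x) t k" if "k \<in> V" for k using t(2) that by (simp add: Pset_def)
    have "r' k dvd dflow (EV V' x) t' k" if k: "k \<in> V'" for k
    proof (cases "k = p")
      case True
      have "r l dvd t e0" using dv[OF lV] by (simp add: dflow_l sg_dvd)
      hence "h dvd t e0" using hl by (rule dvd_trans[rotated])
      moreover have "h dvd dflow (EV V x) t p" using dv[OF pV] hp by (rule dvd_trans[rotated])
      ultimately have "h dvd dflow (EV V x) t p + sg * t e0" by simp
      thus ?thesis using True by (simp add: df dflow_p r'_def)
    next
      case False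
      thus ?thesis using dv[of k] k df[of k] dflow_k[of k] by (simp add: r'_def)
    qed
    moreover have "t' \<in> zv (EV V' x)" unfolding t(1) by (simp add: rs_def zv_def)
    ultimately show "t' \<in> Pset V' x r'" by (simp add: Pset_def)
  next
    fix t' assume t': "t' \<in> Pset V' x r'"
    have t'z: "t' \<in> zv (EV V' x)" and dv': "\<And>k. k \<in> V' \<Longrightarrow> r' k dvd dflow (EV V' x) t' k"
      using t' by (auto simp: Pset_def)
    have "h dvd dflow (EV V' x) t' p" using dv'[of p] pV lp by (simp add: r'_def)
    then obtain q where q: "dflow (EV V' x) t' p = h * q" by (auto elim: dvdE)
    obtain u v where uv: "u * r l + v * r p = h" using bezout_int[of "r l" "r p"] unfolding h_def
      by (auto simp: gcd.commute)
    define t where "t = t'(e0 := sg * r l * u * q)"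
    have df: "dflow (EV V' x) t k = dflow (EV V' x) t' k" for k
      unfolding t_def by (rule dflow_cong) (use e0_notin in auto)
    have "t \<in> Pset V x r" unfolding Pset_def
    proof (intro CollectI conjI ballI)
      show "t \<in> zv (EV V x)" using t'z unfolding t_def zv_def EV_split by auto
      fix k assume k: "k \<in> V"
      show "r k dvd dflow (EV V x) t k"
      proof (cases "k = l")
        case True
        have "dflow (EV V x) t l = (sg * sg) * (r l * u * q)" unfolding dflow_l t_def by (simp add: algebra_simps)
        thus ?thesis using True sg2 by simp
      next
        case kl: False
        show ?thesis
        proof (cases "k = p")
          case True
          have "dflow (EV V x) t p = h * q - (sg * sg) * (r l * u * q)"
            unfolding dflow_p df q by (simp add: t_def algebra_simps)
          also have "\<dots> = r p * (v * q)" unfolding sg2 uv[symmetric] by (simp add: algebra_simps)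
          finally show ?thesis using True by simp
        next
          case False
          thus ?thesis using dv'[of k] k kl dflow_k[of k] df[of k] by (simp add: r'_def)
        qed
      qed
    qed
    moreover have "rs (EV V' x) t = t'"
    proof
      fix e show "rs (EV V' x) t e = t' e"
      proof (cases "e \<in> EV V' x")
        case True thus ?thesis using e0_notin unfolding t_def rs_def by auto
      next
        case False
        hence "t' e = 0" using t'z unfolding zv_def by blast
        thus ?thesis using False unfolding rs_def by simp
      qed
    qed
    ultimately show "t' \<in> rs (EV V' x) ` Pset V x r" by (metis image_eqI)
  qed
  show "Pset V x r \<inter> zv {e0} = {t \<in> zv {e0}. lcm (r l) (r p) dvd t e0}"
  proof (intro equalityI subsetI)
    fix t assume t: "t \<in> Pset V x r \<inter> zv {e0}"
    hence "r l dvd dflow (EV V x) t l" "r p dvd dflow (EV V x) t p" using lV pV by (auto simp: Pset_def)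
    moreover have "dflow (EV V' x) t p = 0"
    proof (rule dflow_zero_on)
      fix e assume "e \<in> EV V' x"
      hence "e \<noteq> e0" using e0_notin by auto
      thus "t e = 0" using t unfolding zv_def by blast
    qed
    ultimately have "r l dvd t e0" "r p dvd t e0" by (auto simp: dflow_l dflow_p sg_dvd)
    thus "t \<in> {t \<in> zv {e0}. lcm (r l) (r p) dvd t e0}" using t by simp
  next
    fix t assume t: "t \<in> {t \<in> zv {e0}. lcm (r l) (r p) dvd t e0}"
    hence tz: "t \<in> zv {e0}" and d: "r l dvd t e0" "r p dvd t e0" by auto
    have z': "dflow (EV V' x) t k = 0" for k
    proof (rule dflow_zero_on)
      fix e assume "e \<in> EV V' x"
      hence "e \<noteq> e0" using e0_notin by auto
      thus "t e = 0" using tz unfolding zv_def by blast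
    qed
    have "t \<in> zv (EV V x)" using tz unfolding zv_def EV_split by auto
    moreover have "r k dvd dflow (EV V x) t k" if "k \<in> V" for k
    proof -
      consider "k = l" | "k = p" | "k \<noteq> l \<and> k \<noteq> p" by blast
      thus ?thesis
        by cases (use d z' in \<open>auto simp: dflow_l dflow_p dflow_k sg_dvd\<close>)
    qed
    ultimately show "t \<in> Pset V x r \<inter> zv {e0}" using tz by (simp add: Pset_def)
  qed
qed

end


lemma P_index:
  assumes "treeV V x" "\<forall>k\<in>V. r k > 0"
  shows "rat_of_nat (idx (zv (EV V x)) (Pset V x r)) = PF V r \<and>
         finite (zv (EV V x) // grel (zv (EV V x)) (Pset V x r))"
  using assms
proof (induction "card V" arbitrary: V r rule: less_induct)
  case less
  have finV: "finite V" and neV: "V \<noteq> {}" using less.prems(1) by (auto simp: treeV_def)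
  show ?case
  proof (cases "card V = 1")
    case True
    obtain v where v: "V = {v}" "EV V x = {}" using tree_single[OF less.prems(1) True] by blast
    have "card (zv (EV V x) // grel (zv (EV V x)) (Pset V x r)) = 1 \<and> finite (zv (EV V x) // grel (zv (EV V x)) (Pset V x r))"
      unfolding v(2) by (rule idx_empty[OF sgrp_Pset])
    moreover have "PF V r = 1"
    proof -
      have "r v > 0" using less.prems(2) v(1) by simp
      thus ?thesis unfolding PF_def v(1) by simp
    qed
    ultimately show ?thesis by (simp add: idx_def)
  next
    case False
    have "card V \<noteq> 0" using finV neV by simp
    hence c2: "2 \<le> card V" using False by linarith
    obtain l p where lp: "l \<in> V" "p \<in> V" "l \<noteq> p" "x l p \<noteq> 0" "\<forall>j. adjV V x l j \<longrightarrow> j = p" "treeV (V - {l}) x"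
      using tree_leaf[OF less.prems(1) c2] by blast
    interpret lc: leafctx V x l p using lp less.prems(1) by unfold_locales auto
    let ?V' = "V - {l}"
    define h where "h = gcd (r p) (r l)"
    define r' where "r' = r(p := h)"
    have rp: "r p > 0" and rl: "r l > 0" using less.prems(2) lp by auto
    have hpos: "h > 0" unfolding h_def using rp by simp
    have r'pos: "\<forall>k\<in>?V'. r' k > 0" using less.prems(2) hpos unfolding r'_def by auto
    have IH: "rat_of_nat (idx (zv (EV ?V' x)) (Pset ?V' x r')) = PF ?V' r' \<and>
         finite (zv (EV ?V' x) // grel (zv (EV ?V' x)) (Pset ?V' x r'))"
      by (rule less.hyps[OF lc.cardV' lp(6) r'pos])
    note st = lc.P_step[OF less.prems(2), folded h_def, folded r'_def]
    define L where "L = lcm (r l) (r p)"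
    have L0: "L \<noteq> 0" unfolding L_def using rp rl by simp
    have Lpos: "L > 0" using L0 unfolding L_def by (simp add: order_le_neq_trans)
    have E: "EV V x = EV ?V' x \<union> {lc.e0}" using lc.EV_split by simp
    have d: "EV ?V' x \<inter> {lc.e0} = {}" using lc.e0_notin by simp
    have s: "Pset V x r \<subseteq> zv (EV ?V' x \<union> {lc.e0})" using Pset_sub[of V x r] E by simp
    have f1: "finite (zv (EV ?V' x) // grel (zv (EV ?V' x)) (rs (EV ?V' x) ` Pset V x r))"
      unfolding st(1) using IH by simp
    have f2: "finite (zv {lc.e0} // grel (zv {lc.e0}) (Pset V x r \<inter> zv {lc.e0}))"
      unfolding st(2) L_def[symmetric] by (rule idx_single(2)[OF L0])
    have fib: "idx (zv (EV ?V' x \<union> {lc.e0})) (Pset V x r) =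
        idx (zv (EV ?V' x)) (rs (EV ?V' x) ` Pset V x r) * idx (zv {lc.e0}) (Pset V x r \<inter> zv {lc.e0})"
      by (rule fibration(1)[OF d sgrp_Pset s f1 f2])
    have fin: "finite (zv (EV ?V' x \<union> {lc.e0}) // grel (zv (EV ?V' x \<union> {lc.e0})) (Pset V x r))"
      by (rule fibration(2)[OF d sgrp_Pset s f1 f2])
    have i2: "idx (zv {lc.e0}) (Pset V x r \<inter> zv {lc.e0}) = nat L"
      unfolding idx_def st(2) L_def[symmetric] using idx_single(1)[OF L0] Lpos by simp
    have idxeq: "rat_of_nat (idx (zv (EV V x)) (Pset V x r)) = PF ?V' r' * rat_of_int L"
    proof -
      have "rat_of_nat (nat L) = rat_of_int L" using Lpos by (simp only: of_nat_nat less_imp_le)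
      thus ?thesis unfolding E fib i2 st(1) using IH by simp
    qed
    define W where "W = ?V' - {p}"
    define P0 where "P0 = (\<Prod>k\<in>W. rat_of_int (r k))"
    define G0 where "G0 = Gcd (r ` W)"
    have pV': "p \<in> ?V'" using lp by auto
    have finW: "finite W" unfolding W_def using finV by simp
    have V'W: "?V' = insert p W" "p \<notin> W" unfolding W_def using pV' by auto
    have VW: "V = insert l (insert p W)" "l \<notin> insert p W" unfolding W_def using lp by auto
    have PF': "PF ?V' r' = rat_of_int h * P0 / rat_of_int (gcd h G0)"
    proof -
      have "(\<Prod>k\<in>?V'. rat_of_int (r' k)) = rat_of_int h * P0"
      proof -
        have "(\<Prod>k\<in>W. rat_of_int (r' k)) = P0"
          unfolding P0_def by (rule prod.cong) (auto simp: W_def r'_def)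
        thus ?thesis unfolding V'W(1) using finW V'W(2) by (simp add: r'_def)
      qed
      moreover have "r' ` ?V' = insert h (r ` W)" unfolding V'W(1) r'_def using V'W(2) by auto
      ultimately show ?thesis unfolding PF_def G0_def by simp
    qed
    have PFV: "PF V r = rat_of_int (r l) * rat_of_int (r p) * P0 / rat_of_int (gcd h G0)"
    proof -
      have "(\<Prod>k\<in>V. rat_of_int (r k)) = rat_of_int (r l) * (rat_of_int (r p) * P0)"
        unfolding VW(1) P0_def using finW V'W(2) VW(2) by simp
      moreover have "Gcd (r ` V) = gcd h G0"
        unfolding VW(1) G0_def h_def by (simp add: gcd.assoc gcd.left_commute gcd.commute)
      ultimately show ?thesis unfolding PF_def by simp
    qed
    have hL: "h * L = r l * r p"
      using prod_gcd_lcm_int[of "r l" "r p"] rp rl unfolding h_def L_def by (simp add: gcd.commute)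
    have "PF ?V' r' * rat_of_int L = PF V r"
    proof -
      have "rat_of_int h * rat_of_int L = rat_of_int (r l) * rat_of_int (r p)"
        using hL by (metis of_int_mult)
      thus ?thesis unfolding PF' PFV by (simp add: field_simps)
    qed
    thus ?thesis using idxeq fin E by simp
  qed
qed


lemma dflow_inj:
  assumes "treeV V x" "t \<in> zv (EV V x)" "\<forall>k\<in>V. dflow (EV V x) t k = 0"
  shows "t = 0"
  using assms
proof (induction "card V" arbitrary: V t rule: less_induct)
  case less
  have finV: "finite V" and neV: "V \<noteq> {}" using less.prems(1) by (auto simp: treeV_def)
  show ?case
  proof (cases "card V = 1")
    case True
    obtain v where v: "V = {v}" "EV V x = {}" using tree_single[OF less.prems(1) True] by blast
    have "t \<in> {0}" using less.prems(2) unfolding v(2) zv_empty .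
    thus ?thesis by simp
  next
    case False
    have "card V \<noteq> 0" using finV neV by simp
    hence c2: "2 \<le> card V" using False by linarith
    obtain l p where lp: "l \<in> V" "p \<in> V" "l \<noteq> p" "x l p \<noteq> 0" "\<forall>j. adjV V x l j \<longrightarrow> j = p" "treeV (V - {l}) x"
      using tree_leaf[OF less.prems(1) c2] by blast
    interpret lc: leafctx V x l p using lp less.prems(1) by unfold_locales auto
    have "lc.sg * t lc.e0 = 0" using less.prems(3) lp(1) lc.dflow_l[of t] by simp
    hence t0: "t lc.e0 = 0" using lc.sg2 by (metis mult_zero_right mult.assoc mult_1)
    have tz: "t \<in> zv (EV (V - {l}) x)"
    proof -
      have "t e = 0" if "e \<notin> EV (V - {l}) x" for e
      proof (cases "e = lc.e0")
        case True thus ?thesis using t0 by simp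
      next
        case False thus ?thesis using that less.prems(2) lc.EV_split unfolding zv_def by blast
      qed
      thus ?thesis unfolding zv_def by blast
    qed
    have "\<forall>k\<in>V - {l}. dflow (EV (V - {l}) x) t k = 0"
    proof
      fix k assume k: "k \<in> V - {l}"
      show "dflow (EV (V - {l}) x) t k = 0"
      proof (cases "k = p")
        case True thus ?thesis using less.prems(3) lp(2) lc.dflow_p[of t] t0 by simp
      next
        case False thus ?thesis using less.prems(3) k lc.dflow_k[of k t] by simp
      qed
    qed
    thus ?thesis by (rule less.hyps[OF lc.cardV' lp(6) tz])
  qed
qed

lemma dflow_surj:
  assumes "treeV V x" "(\<Sum>k\<in>V. z k) = 0"
  shows "\<exists>t \<in> zv (EV V x). \<forall>k\<in>V. dflow (EV V x) t k = z k"
  using assms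
proof (induction "card V" arbitrary: V z rule: less_induct)
  case less
  have finV: "finite V" and neV: "V \<noteq> {}" using less.prems(1) by (auto simp: treeV_def)
  show ?case
  proof (cases "card V = 1")
    case True
    obtain v where v: "V = {v}" "EV V x = {}" using tree_single[OF less.prems(1) True] by blast
    have "z v = 0" using less.prems(2) v by simp
    thus ?thesis using v by (intro bexI[of _ 0]) (auto simp: dflow_def zv_def)
  next
    case False
    have "card V \<noteq> 0" using finV neV by simp
    hence c2: "2 \<le> card V" using False by linarith
    obtain l p where lp: "l \<in> V" "p \<in> V" "l \<noteq> p" "x l p \<noteq> 0" "\<forall>j. adjV V x l j \<longrightarrow> j = p" "treeV (V - {l}) x"
      using tree_leaf[OF less.prems(1) c2] by blast
    interpret lc: leafctx V x l p using lp less.prems(1) by unfold_locales auto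
    define z' where "z' = z(p := z p + z l)"
    have "(\<Sum>k\<in>V - {l}. z' k) = 0"
    proof -
      have "(\<Sum>k\<in>V - {l}. z' k) = z' p + (\<Sum>k\<in>V - {l} - {p}. z' k)"
        using lp finV by (simp add: sum.remove)
      also have "(\<Sum>k\<in>V - {l} - {p}. z' k) = (\<Sum>k\<in>V - {l} - {p}. z k)"
        by (rule sum.cong) (auto simp: z'_def)
      also have "(\<Sum>k\<in>V. z k) = z l + (z p + (\<Sum>k\<in>V - {l} - {p}. z k))"
        using lp finV by (simp add: sum.remove)
      ultimately show ?thesis using less.prems(2) by (simp add: z'_def)
    qed
    then obtain t' where t': "t' \<in> zv (EV (V - {l}) x)" "\<forall>k\<in>V - {l}. dflow (EV (V - {l}) x) t' k = z' k"
      using less.hyps[OF lc.cardV' lp(6)] by blast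
    define t where "t = t'(lc.e0 := lc.sg * z l)"
    have df: "dflow (EV (V - {l}) x) t k = dflow (EV (V - {l}) x) t' k" for k
      unfolding t_def by (rule dflow_cong) (use lc.e0_notin in auto)
    have "t \<in> zv (EV V x)" using t'(1) unfolding t_def zv_def lc.EV_split by auto
    moreover have "\<forall>k\<in>V. dflow (EV V x) t k = z k"
    proof
      fix k assume k: "k \<in> V"
      show "dflow (EV V x) t k = z k"
      proof (cases "k = l")
        case True
        have "dflow (EV V x) t l = (lc.sg * lc.sg) * z l" unfolding lc.dflow_l t_def by simp
        thus ?thesis using True lc.sg2 by simp
      next
        case kl: False
        show ?thesis
        proof (cases "k = p")
          case True
          have "dflow (EV V x) t p = z p + z l - (lc.sg * lc.sg) * z l"
            unfolding lc.dflow_p df using t'(2) lp by (simp add: t_def z'_def)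
          thus ?thesis using True lc.sg2 by simp
        next
          case False
          thus ?thesis using t'(2) k kl lc.dflow_k[of k t] df[of k] by (simp add: z'_def)
        qed
      qed
    qed
    ultimately show ?thesis by blast
  qed
qed

lemma dflow_sum:
  assumes "finite V" "E \<subseteq> V \<times> V" "finite E"
  shows "(\<Sum>k\<in>V. dflow E t k) = 0"
proof -
  have "(\<Sum>k\<in>V. dflow E t k) = (\<Sum>e\<in>E. \<Sum>k\<in>V. (if fst e = k then t e else 0) - (if snd e = k then t e else 0))"
    unfolding dflow_def by (rule sum.swap)
  also have "\<dots> = (\<Sum>e\<in>E. 0)"
  proof (rule sum.cong[OF refl])
    fix e assume "e \<in> E"
    hence "fst e \<in> V" "snd e \<in> V" using assms(2) by auto
    thus "(\<Sum>k\<in>V. (if fst e = k then t e else 0) - (if snd e = k then t e else 0)) = 0"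
      using assms(1) by (simp add: sum_subtractf)
  qed
  finally show ?thesis by simp
qed

lemma sum_fst_reindex:
  assumes "finite V" "E \<subseteq> V \<times> V"
  shows "(\<Sum>e\<in>E. if fst e = k then f e else 0) = (\<Sum>j\<in>V. if (k, j) \<in> E then f (k, j) else (0::int))"
proof -
  have fE: "finite E" using assms finite_subset by blast
  have "(\<Sum>e\<in>E. if fst e = k then f e else 0) = (\<Sum>e\<in>{e\<in>E. fst e = k}. f e)"
    using fE by (simp add: sum.inter_filter)
  also have "{e\<in>E. fst e = k} = Pair k ` {j\<in>V. (k, j) \<in> E}" using assms(2) by force
  also have "(\<Sum>e\<in>Pair k ` {j\<in>V. (k, j) \<in> E}. f e) = (\<Sum>j\<in>{j\<in>V. (k, j) \<in> E}. f (k, j))"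
    by (subst sum.reindex) (auto simp: inj_on_def)
  also have "\<dots> = (\<Sum>j\<in>V. if (k, j) \<in> E then f (k, j) else 0)"
    using assms(1) by (simp add: sum.inter_filter)
  finally show ?thesis .
qed

lemma sum_snd_reindex:
  assumes "finite V" "E \<subseteq> V \<times> V"
  shows "(\<Sum>e\<in>E. if snd e = k then f e else 0) = (\<Sum>j\<in>V. if (j, k) \<in> E then f (j, k) else (0::int))"
proof -
  have fE: "finite E" using assms finite_subset by blast
  have "(\<Sum>e\<in>E. if snd e = k then f e else 0) = (\<Sum>e\<in>{e\<in>E. snd e = k}. f e)"
    using fE by (simp add: sum.inter_filter)
  also have "{e\<in>E. snd e = k} = (\<lambda>j. (j, k)) ` {j\<in>V. (j, k) \<in> E}" using assms(2) by force
  also have "(\<Sum>e\<in>(\<lambda>j. (j, k)) ` {j\<in>V. (j, k) \<in> E}. f e) = (\<Sum>j\<in>{j\<in>V. (j, k) \<in> E}. f (j, k))"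
    by (subst sum.reindex) (auto simp: inj_on_def)
  also have "\<dots> = (\<Sum>j\<in>V. if (j, k) \<in> E then f (j, k) else 0)"
    using assms(1) by (simp add: sum.inter_filter)
  finally show ?thesis .
qed

lemma dflow_Qvec:
  assumes finV: "finite V" and sym: "\<forall>i\<in>V. \<forall>j\<in>V. x i j = x j i" and k: "k \<in> V"
  shows "dflow (EV V x) (Qvec V x r y) k = (\<Sum>j\<in>V. int (x k j) * (r j * y k - r k * y j))"
proof -
  let ?E = "EV V x"
  have sub: "?E \<subseteq> V \<times> V" by (auto simp: EV_def)
  have "dflow ?E (Qvec V x r y) k = (\<Sum>e\<in>?E. if fst e = k then Qvec V x r y e else 0) - (\<Sum>e\<in>?E. if snd e = k then Qvec V x r y e else 0)"
    unfolding dflow_def by (simp add: sum_subtractf)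
  also have "\<dots> = (\<Sum>j\<in>V. if (k, j) \<in> ?E then Qvec V x r y (k, j) else 0) - (\<Sum>j\<in>V. if (j, k) \<in> ?E then Qvec V x r y (j, k) else 0)"
    using sum_fst_reindex[OF finV sub] sum_snd_reindex[OF finV sub] by simp
  also have "\<dots> = (\<Sum>j\<in>V. (if (k, j) \<in> ?E then Qvec V x r y (k, j) else 0) - (if (j, k) \<in> ?E then Qvec V x r y (j, k) else 0))"
    by (simp add: sum_subtractf)
  also have "\<dots> = (\<Sum>j\<in>V. int (x k j) * (r j * y k - r k * y j))"
  proof (rule sum.cong[OF refl])
    fix j assume j: "j \<in> V"
    have xs: "x j k = x k j" using sym j k by blast
    consider "k < j" | "j < k" | "j = k" by linarith
    thus "(if (k, j) \<in> ?E then Qvec V x r y (k, j) else 0) - (if (j, k) \<in> ?E then Qvec V x r y (j, k) else 0) =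
          int (x k j) * (r j * y k - r k * y j)"
    proof cases
      case 1
      thus ?thesis using j k by (auto simp: EV_def Qvec_def)
    next
      case 2
      thus ?thesis using j k xs by (auto simp: EV_def Qvec_def algebra_simps)
    next
      case 3
      thus ?thesis by (auto simp: EV_def)
    qed
  qed
  finally show ?thesis .
qed


lemma lap_sum:
  "(\<Sum>j<n. lap x d k j * y j) = (if k < n then d k * y k else 0) - (\<Sum>j<n. int (x k j) * y j)"
proof -
  have "(\<Sum>j<n. lap x d k j * y j) = (\<Sum>j<n. (if k = j then d k * y j else 0) - int (x k j) * y j)"
    unfolding lap_def by (rule sum.cong) (auto simp: algebra_simps)
  also have "\<dots> = (\<Sum>j<n. (if k = j then d k * y j else 0)) - (\<Sum>j<n. int (x k j) * y j)"
    by (rule sum_subtractf)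
  also have "(\<Sum>j<n. (if k = j then d k * y j else 0)) = (if k < n then d k * y k else 0)"
    by (simp add: sum.delta)
  finally show ?thesis .
qed

lemma Qvec_restrict: "(\<And>j. j \<in> V \<Longrightarrow> y j = y0 j) \<Longrightarrow> Qvec V x r y = Qvec V x r y0"
  unfolding Qvec_def by (rule ext) (auto simp: EV_def)

theorem mainTheorem13:
  fixes n :: nat and x :: "nat \<Rightarrow> nat \<Rightarrow> nat" and r d :: "nat \<Rightarrow> int"
  assumes "loopless_multigraph n x"
    and "skel_connected n x"
    and "skel_is_tree n x"
    and "arith_structure n x r d"
  shows "rat_of_nat (card (critical_group n x d)) =
     (\<Prod>(i, j) \<in> {(i, j). i < j \<and> j < n \<and> x i j \<noteq> 0}. rat_of_nat (x i j)) *
     (\<Prod>i<n. (rat_of_int (r i)) powi (int (skel_degree n x i) - 2))"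
proof -
  define V where "V = {..<n}"
  define E where "E = EV V x"
  have finV: "finite V" unfolding V_def by simp
  have symx: "\<forall>i\<in>V. \<forall>j\<in>V. x i j = x j i" using assms(1) unfolding loopless_multigraph_def V_def by auto
  have adjeq: "skel_adj n x = adjV V x"
    unfolding V_def by (auto simp: fun_eq_iff skel_adj_def adjV_def)
  have T: "treeV V x" unfolding treeV_def
  proof (intro conjI)
    show "finite V" by (rule finV)
    have "0 < n" using assms(3) unfolding skel_is_tree_def by simp
    hence "0 \<in> V" unfolding V_def by simp
    thus "V \<noteq> {}" by blast
    show "\<forall>i\<in>V. \<forall>j\<in>V. x i j = x j i" by (rule symx)
    show "\<forall>i\<in>V. \<forall>j\<in>V. (adjV V x)\<^sup>*\<^sup>* i j"
      using assms(2) unfolding skel_connected_def adjeq V_def by auto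
    show "\<not> cycV V x"
      using assms(3) unfolding skel_is_tree_def skel_has_cycle_def cycV_def adjeq V_def by auto
  qed
  have rpos: "\<forall>k\<in>V. r k > 0" and G1: "Gcd (r ` V) = 1"
    and arith: "\<And>i. i < n \<Longrightarrow> (\<Sum>j<n. lap x d i j * r j) = 0"
    using assms(4) unfolding arith_structure_def V_def by auto
  have rnz: "r k \<noteq> 0" if "k < n" for k using rpos that unfolding V_def by force
  define Mv where "Mv y = (\<lambda>i. if i < n then (\<Sum>j<n. lap x d i j * y j) else 0)" for y :: "nat \<Rightarrow> int"
  have IL: "image_lattice n x d = {Mv y | y. y \<in> zvecs n}" unfolding image_lattice_def Mv_def ..
  have KQ: "dflow E (Qvec V x r y) k = r k * (\<Sum>j<n. lap x d k j * y j)" if k: "k < n" for k y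
  proof -
    have "dflow E (Qvec V x r y) k = (\<Sum>j\<in>V. int (x k j) * (r j * y k - r k * y j))"
      unfolding E_def by (rule dflow_Qvec[OF finV symx]) (use k in \<open>simp add: V_def\<close>)
    also have "\<dots> = y k * (\<Sum>j<n. int (x k j) * r j) - r k * (\<Sum>j<n. int (x k j) * y j)"
      unfolding V_def by (simp add: sum_distrib_left sum_subtractf algebra_simps)
    also have "(\<Sum>j<n. int (x k j) * r j) = d k * r k"
      using arith[OF k] lap_sum[where n=n and x=x and d=d and k=k and y=r] k by simp
    finally have "dflow E (Qvec V x r y) k = y k * (d k * r k) - r k * (\<Sum>j<n. int (x k j) * y j)" .
    moreover have "(\<Sum>j<n. lap x d k j * y j) = d k * y k - (\<Sum>j<n. int (x k j) * y j)"
      using lap_sum[where n=n and x=x and d=d and k=k and y=y] k by simp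
    ultimately show ?thesis by (simp add: right_diff_distrib)
  qed
  define P where "P = Pset V x r"
  define Q where "Q = Qset V x r"
  have QP: "Q \<subseteq> P"
  proof
    fix t assume "t \<in> Q"
    then obtain y where t: "t = Qvec V x r y" unfolding Q_def Qset_def by blast
    have "t \<in> zv E" using Qset_sub[of V x r] t unfolding E_def Qset_def by auto
    moreover have "r k dvd dflow E t k" if "k \<in> V" for k using KQ[of k y] that t unfolding V_def by simp
    ultimately show "t \<in> P" unfolding P_def Pset_def E_def by simp
  qed
  define \<beta> where "\<beta> t = (\<lambda>k. if k < n then dflow E t k div r k else 0)" for t
  have dvP: "r k dvd dflow E t k" if "t \<in> P" "k < n" for t k
    using that unfolding P_def Pset_def E_def V_def by auto
  have \<beta>mul: "r k * \<beta> t k = dflow E t k" if "t \<in> P" "k < n" for t k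
    using dvP[OF that] that(2) unfolding \<beta>_def by simp
  have \<beta>Q: "\<beta> (Qvec V x r y) = Mv y" for y
    unfolding \<beta>_def Mv_def using KQ rnz by (auto simp: fun_eq_iff)
  define K0 where "K0 = {v \<in> zvecs n. (\<Sum>i<n. r i * v i) = 0}"
  have \<beta>K: "\<beta> t \<in> K0" if "t \<in> P" for t
  proof -
    have "\<beta> t \<in> zvecs n" unfolding \<beta>_def zvecs_def by simp
    moreover have "(\<Sum>i<n. r i * \<beta> t i) = (\<Sum>i\<in>V. dflow E t i)"
      unfolding V_def using \<beta>mul[OF that] by (intro sum.cong) auto
    moreover have "(\<Sum>i\<in>V. dflow E t i) = 0"
      unfolding E_def by (rule dflow_sum[OF finV _ finite_EV[OF finV]]) (auto simp: EV_def)
    ultimately show ?thesis unfolding K0_def by simp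
  qed
  have QinP: "Qvec V x r y \<in> P" for y using QP unfolding Q_def Qset_def by blast
  have ILK: "image_lattice n x d \<subseteq> K0"
    unfolding IL using \<beta>K[OF QinP] \<beta>Q by auto
  have sIL: "sgrp (image_lattice n x d)" unfolding IL sgrp_def
  proof (intro conjI ballI)
    have "Mv 0 = 0" unfolding Mv_def by (simp add: fun_eq_iff)
    moreover have "(0 :: nat \<Rightarrow> int) \<in> zvecs n" by (simp add: zvecs_def)
    ultimately show "0 \<in> {Mv y |y. y \<in> zvecs n}" by (metis (mono_tags, lifting) mem_Collect_eq)
    fix a b assume "a \<in> {Mv y |y. y \<in> zvecs n}" "b \<in> {Mv y |y. y \<in> zvecs n}"
    then obtain y y' where yy: "a = Mv y" "b = Mv y'" "y \<in> zvecs n" "y' \<in> zvecs n" by blast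
    have "Mv y - Mv y' = Mv (y - y')" unfolding Mv_def by (simp add: fun_eq_iff sum_subtractf algebra_simps)
    moreover have "y - y' \<in> zvecs n" using yy by (simp add: zvecs_def)
    ultimately show "a - b \<in> {Mv y |y. y \<in> zvecs n}" using yy by blast
  qed
  have sK0: "sgrp K0" unfolding K0_def sgrp_def zvecs_def
    by (simp add: sum_subtractf algebra_simps)
  have sP: "sgrp P" unfolding P_def by (rule sgrp_Pset)
  have sQ: "sgrp Q" unfolding Q_def by (rule sgrp_Qset)
  have \<beta>diff: "\<beta> (t - t') = \<beta> t - \<beta> t'" if "t \<in> P" "t' \<in> P" for t t'
  proof
    fix k show "\<beta> (t - t') k = (\<beta> t - \<beta> t') k"
      using dvP[OF that(1)] dvP[OF that(2)] unfolding \<beta>_def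
      by (auto simp: dflow_diff div_diff)
  qed
  have cardPK: "card (P // grel P Q) = card (K0 // grel K0 (image_lattice n x d))"
  proof (rule quot_card_eq[where f = \<beta>])
    show "equiv P (grel P Q)" by (rule equiv_grel[OF sQ])
    show "equiv K0 (grel K0 (image_lattice n x d))" by (rule equiv_grel[OF sIL])
    show "\<beta> t \<in> K0" if "t \<in> P" for t using \<beta>K[OF that] .
    show "\<exists>t\<in>P. (\<beta> t, v) \<in> grel K0 (image_lattice n x d)" if v: "v \<in> K0" for v
    proof -
      have "(\<Sum>k\<in>V. r k * v k) = 0" using v unfolding K0_def V_def by simp
      then obtain t where t: "t \<in> zv (EV V x)" "\<forall>k\<in>V. dflow (EV V x) t k = r k * v k"
        using dflow_surj[OF T, of "\<lambda>k. r k * v k"] by blast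
      have tP: "t \<in> P" using t unfolding P_def Pset_def by simp
      have "\<beta> t = v"
      proof
        fix k show "\<beta> t k = v k"
          using t(2) rnz v unfolding \<beta>_def E_def V_def K0_def zvecs_def by auto
      qed
      moreover have "0 \<in> image_lattice n x d" using sgrp_0[OF sIL] .
      ultimately have "(\<beta> t, v) \<in> grel K0 (image_lattice n x d)" using v unfolding grel_def by simp
      thus ?thesis using tP by blast
    qed
    show "(t, t') \<in> grel P Q \<longleftrightarrow> (\<beta> t, \<beta> t') \<in> grel K0 (image_lattice n x d)"
      if tt: "t \<in> P" "t' \<in> P" for t t'
    proof -
      have dP: "t - t' \<in> P" using sgrp_diff[OF sP tt] .
      have "t - t' \<in> Q \<longleftrightarrow> \<beta> t - \<beta> t' \<in> image_lattice n x d"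
      proof
        assume "t - t' \<in> Q"
        then obtain y where y: "t - t' = Qvec V x r y" unfolding Q_def Qset_def by blast
        define y0 where "y0 = (\<lambda>j. if j < n then y j else 0)"
        have "Qvec V x r y = Qvec V x r y0" by (rule Qvec_restrict) (simp add: y0_def V_def)
        hence "\<beta> t - \<beta> t' = Mv y0" using \<beta>diff[OF tt] y \<beta>Q by simp
        moreover have "y0 \<in> zvecs n" by (simp add: y0_def zvecs_def)
        ultimately show "\<beta> t - \<beta> t' \<in> image_lattice n x d" unfolding IL by blast
      next
        assume "\<beta> t - \<beta> t' \<in> image_lattice n x d"
        then obtain y where y: "\<beta> t - \<beta> t' = Mv y" "y \<in> zvecs n" unfolding IL by blast
        define w where "w = (t - t') - Qvec V x r y"
        have wz: "w \<in> zv (EV V x)" unfolding w_def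
          using sgrp_diff[OF sgrp_zv] dP QinP Pset_sub unfolding P_def by blast
        have "\<forall>k\<in>V. dflow (EV V x) w k = 0"
        proof
          fix k assume "k \<in> V"
          hence k: "k < n" unfolding V_def by simp
          have "dflow E (t - t') k = r k * \<beta> (t - t') k" using \<beta>mul[OF dP k] by simp
          also have "\<dots> = r k * Mv y k" using y(1) \<beta>diff[OF tt] by simp
          also have "\<dots> = dflow E (Qvec V x r y) k" using KQ[OF k] k unfolding Mv_def by simp
          finally show "dflow (EV V x) w k = 0" unfolding w_def dflow_diff E_def[symmetric] by simp
        qed
        hence "w = 0" by (rule dflow_inj[OF T wz])
        hence "t - t' = Qvec V x r y" unfolding w_def by simp
        thus "t - t' \<in> Q" unfolding Q_def Qset_def by blast
      qed
      thus ?thesis using tt \<beta>K unfolding grel_def by auto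
    qed
  qed
  have QI: "rat_of_nat (idx (zv E) Q) = QF V x r \<and> finite (zv E // grel (zv E) Q)"
    unfolding E_def Q_def by (rule Q_index[OF T rpos])
  have PI: "rat_of_nat (idx (zv E) P) = PF V r"
    unfolding E_def P_def using P_index[OF T rpos] by simp
  have PsubE: "P \<subseteq> zv E" unfolding P_def E_def by (rule Pset_sub)
  have fins: "finite (zv E // grel (zv E) P)" "finite (P // grel P Q)"
    using tower_fin[OF sQ sP sgrp_zv QP PsubE] QI by auto
  have tw: "card (zv E // grel (zv E) Q) = card (zv E // grel (zv E) P) * card (P // grel P Q)"
    by (rule tower(1)[OF sQ sP sgrp_zv QP PsubE fins])
  have PFnz: "PF V r \<noteq> 0" unfolding PF_def G1 using rpos finV by (simp add: prod_zero_iff) force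
  have cPQ: "rat_of_nat (card (P // grel P Q)) = QF V x r / PF V r"
    using tw QI PI PFnz unfolding idx_def by (simp add: field_simps)
  have finK: "finite (K0 // grel K0 (image_lattice n x d))"
  proof -
    have "P // grel P Q \<noteq> {}" using sgrp_0[OF sP] by auto
    thus ?thesis using card_fin_transfer[OF fins(2) _ cardPK[symmetric]] by simp
  qed
  define Tors where "Tors = {v \<in> zvecs n. \<exists>k::int. k > 0 \<and> (\<lambda>i. k * v i) \<in> image_lattice n x d}"
  have TK: "Tors = K0"
  proof (intro equalityI subsetI)
    fix v assume "v \<in> Tors"
    then obtain k :: int where k: "k > 0" "(\<lambda>i. k * v i) \<in> image_lattice n x d" "v \<in> zvecs n"
      unfolding Tors_def by blast
    hence "(\<Sum>i<n. r i * (k * v i)) = 0" using ILK unfolding K0_def by auto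
    hence "k * (\<Sum>i<n. r i * v i) = 0" by (simp add: sum_distrib_left algebra_simps)
    thus "v \<in> K0" using k unfolding K0_def by simp
  next
    fix v assume v: "v \<in> K0"
    let ?R = "grel K0 (image_lattice n x d)"
    define N where "N = card (K0 // ?R)"
    define f where "f j = ?R `` {(\<lambda>i. int j * v i)}" for j :: nat
    have mK: "(\<lambda>i. int j * v i) \<in> K0" for j
    proof -
      have "(\<Sum>i<n. r i * (int j * v i)) = int j * (\<Sum>i<n. r i * v i)"
        by (simp add: sum_distrib_left algebra_simps)
      thus ?thesis using v unfolding K0_def zvecs_def by simp
    qed
    have "f ` {0..N} \<subseteq> K0 // ?R" unfolding f_def using mK by (auto intro: quotientI)
    hence "\<not> inj_on f {0..N}" using card_inj_on_le[of f "{0..N}" "K0 // ?R"] finK unfolding N_def by fastforce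
    then obtain j1 j2 where j: "j1 \<noteq> j2" "f j1 = f j2" unfolding inj_on_def by blast
    have key: "\<exists>k::int. k > 0 \<and> (\<lambda>i. k * v i) \<in> image_lattice n x d"
      if "f a = f b" "b < a" for a b
    proof -
      have "((\<lambda>i. int a * v i), (\<lambda>i. int b * v i)) \<in> ?R"
        using that(1) eq_equiv_class_iff[OF equiv_grel[OF sIL] mK mK] unfolding f_def by blast
      hence "(\<lambda>i. int a * v i) - (\<lambda>i. int b * v i) \<in> image_lattice n x d" unfolding grel_def by simp
      moreover have "(\<lambda>i. int a * v i) - (\<lambda>i. int b * v i) = (\<lambda>i. (int a - int b) * v i)"
        by (simp add: fun_eq_iff algebra_simps)
      ultimately show ?thesis using that(2) by (intro exI[of _ "int a - int b"]) auto
    qed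
    have "\<exists>k::int. k > 0 \<and> (\<lambda>i. k * v i) \<in> image_lattice n x d"
    proof (cases "j2 < j1")
      case True thus ?thesis using key j by blast
    next
      case False hence "j1 < j2" using j(1) by simp
      thus ?thesis using key j by metis
    qed
    thus "v \<in> Tors" using v unfolding Tors_def K0_def by blast
  qed
  have critEq: "critical_group n x d = K0 // grel K0 (image_lattice n x d)"
  proof -
    have "critical_group n x d = K0 // {(u, v). u \<in> zvecs n \<and> v \<in> zvecs n \<and> (\<lambda>i. u i - v i) \<in> image_lattice n x d}"
      unfolding critical_group_def TK[unfolded Tors_def] ..
    also have "\<dots> = K0 // grel K0 (image_lattice n x d)"
    proof -
      have "{(u, v). u \<in> zvecs n \<and> v \<in> zvecs n \<and> (\<lambda>i. u i - v i) \<in> image_lattice n x d} `` {v} =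
            grel K0 (image_lattice n x d) `` {v}" if v: "v \<in> K0" for v
      proof (intro equalityI subsetI)
        fix u assume "u \<in> {(u, v). u \<in> zvecs n \<and> v \<in> zvecs n \<and> (\<lambda>i. u i - v i) \<in> image_lattice n x d} `` {v}"
        hence u: "u \<in> zvecs n" "v - u \<in> image_lattice n x d" by (auto simp: fun_diff_def)
        have "v - (v - u) \<in> K0" using sgrp_diff[OF sK0 v] u(2) ILK by blast
        thus "u \<in> grel K0 (image_lattice n x d) `` {v}" using v u unfolding grel_def by simp
      next
        fix u assume "u \<in> grel K0 (image_lattice n x d) `` {v}"
        thus "u \<in> {(u, v). u \<in> zvecs n \<and> v \<in> zvecs n \<and> (\<lambda>i. u i - v i) \<in> image_lattice n x d} `` {v}"
          unfolding grel_def K0_def by (auto simp: fun_diff_def)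
      qed
      thus ?thesis unfolding quotient_def by auto
    qed
    finally show ?thesis .
  qed
  have sd: "skel_degree n x i = degV V x i" if "i < n" for i
  proof -
    have "{j. skel_adj n x i j} = {j \<in> V. j \<noteq> i \<and> x i j \<noteq> 0}"
      using that unfolding skel_adj_def V_def by auto
    thus ?thesis unfolding skel_degree_def degV_def by simp
  qed
  have Eeq: "{(i, j). i < j \<and> j < n \<and> x i j \<noteq> 0} = EV V x" unfolding EV_def V_def by auto
  have prodE: "(\<Prod>(i, j) \<in> {(i, j). i < j \<and> j < n \<and> x i j \<noteq> 0}. rat_of_nat (x i j)) =
      (\<Prod>e\<in>EV V x. rat_of_nat (x (fst e) (snd e)))"
    unfolding Eeq by (simp add: case_prod_beta)
  have powr: "(\<Prod>i<n. rat_of_int (r i) powi (int (degV V x i) - 1)) =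
       (\<Prod>i<n. rat_of_int (r i) powi (int (degV V x i) - 2)) * (\<Prod>i<n. rat_of_int (r i))"
  proof -
    have "rat_of_int (r i) powi (int (degV V x i) - 1) = rat_of_int (r i) powi (int (degV V x i) - 2) * rat_of_int (r i)"
      if "i < n" for i
    proof -
      have "rat_of_int (r i) \<noteq> 0" using rnz[OF that] by simp
      from power_int_minus_mult[of "rat_of_int (r i)" "int (degV V x i) - 1", OF disjI1[OF this]]
      show ?thesis by simp
    qed
    thus ?thesis by (simp add: prod.distrib[symmetric])
  qed
  have Pr: "(\<Prod>i<n. rat_of_int (r i)) \<noteq> 0" using rnz by simp
  have "rat_of_nat (card (critical_group n x d)) = QF V x r / PF V r"
    unfolding critEq cardPK[symmetric] by (rule cPQ)
  also have "\<dots> = (\<Prod>e\<in>EV V x. rat_of_nat (x (fst e) (snd e))) * (\<Prod>i<n. rat_of_int (r i) powi (int (degV V x i) - 2))"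
  proof -
    have pw: "(\<Prod>k\<in>V. rat_of_int (r k) powi (int (degV V x k) - 1)) =
       (\<Prod>i<n. rat_of_int (r i) powi (int (degV V x i) - 2)) * (\<Prod>i<n. rat_of_int (r i))"
      using powr unfolding V_def .
    have pr: "(\<Prod>k\<in>V. rat_of_int (r k)) = (\<Prod>i<n. rat_of_int (r i))" unfolding V_def ..
    show ?thesis unfolding QF_def PF_def G1 pw pr using Pr by simp
  qed
  also have "\<dots> = (\<Prod>(i, j) \<in> {(i, j). i < j \<and> j < n \<and> x i j \<noteq> 0}. rat_of_nat (x i j)) *
     (\<Prod>i<n. (rat_of_int (r i)) powi (int (skel_degree n x i) - 2))"
    unfolding prodE using sd by simp
  finally show ?thesis .
qed


end
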